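(* Let $N\ge1$, $p\ge2$, $w,g\in L^1_{loc}(\mathbb{R}^N)$ positive a.e. with $g^{-1}\in L^\infty(\mathbb{R}^N)$. Let $\delta=\gamma\ge1$ with $(\delta,p)$ in the class $P_a$. Assume there exist constants $\lambda>0$ and $C>0$ such that $\lambda<pS_p^a$ and $\int_{B_{2R}(0)}w^{S_p^a}dx\le CR^{\lambda}$ for all $R\ge1$. Then there is no $u\in C^1(\mathbb{R}^N)$ with $u>0$ in $\mathbb{R}^N$ which is a stable weak solution of $\operatorname{div}(w|\nabla u|^{p-2}\nabla u)=g(x)(u^{-\delta}+u^{-\gamma})$ in $\mathbb{R}^N$.
   Context: Weak solution and stability are with respect to $f(t)=-t^{-\delta}-t^{-\gamma}$ and the equation $-\operatorname{div}(w|\nabla u|^{p-2}\nabla u)=gf(u)$: $u\in C^1$ is a weak solution if $\int w|\nabla u|^{p-2}\nabla u\cdot\nabla\varphi=\int gf(u)\varphi$ for all $\varphi\in C^1_c(\mathbb{R}^N)$; it is stable if for all $\varphi\in C^1_c(\mathbb{R}^N)$, $\int w|\nabla u|^{p-2}|\nabla\varphi|^2+(p-2)\int w|\nabla u|^{p-4}(\nabla u\cdot\nabla\varphi)^2-\int gf'(u)\varphi^2\ge0$ (middle integrand $=0$ where $\nabla u=0$). Class $P_a$: $(\delta,p)\in P_a$ if either $2\le p<3$ and $\delta\ge1$, or $p=3$ and $\delta>1$, or $p>3$ and $\delta>\frac{(p-1)^2}{4}$. $s_p=\delta+\sqrt{\delta^2+\delta}$ if $p=2$, $s_p=\frac{2\delta}{p-1}-\frac{p-1}{2}$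 if $p>2$; $S_p^a=1+\frac{2s_p}{p-1+\delta}$. $B_r(0)$ is the open ball of radius $r$ centered at the origin. *)

theory Defs
  imports "HOL-Analysis.Analysis"
begin

definition grad :: "('a::euclidean_space \<Rightarrow> real) \<Rightarrow> 'a \<Rightarrow> 'a" where
  "grad u x = (\<Sum>b\<in>Basis. frechet_derivative u (at x) b *\<^sub>R b)"

definition C1_fun :: "('a::euclidean_space \<Rightarrow> real) \<Rightarrow> bool" where
  "C1_fun u \<longleftrightarrow> (\<forall>x. u differentiable (at x)) \<and> continuous_on UNIV (grad u)"

definition C1c_fun :: "('a::euclidean_space \<Rightarrow> real) \<Rightarrow> bool" where
  "C1c_fun \<phi> \<longleftrightarrow> C1_fun \<phi> \<and> compact (closure {x. \<phi> x \<noteq> 0})"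

text \<open>Power t^a for t \<ge> 0, a \<ge> 0, with the convention t^0 = 1 (also for t = 0).\<close>
definition rpow :: "real \<Rightarrow> real \<Rightarrow> real" where
  "rpow t a = (if a = 0 then 1 else t powr a)"

definition fsing :: "real \<Rightarrow> real \<Rightarrow> real \<Rightarrow> real" where
  "fsing \<delta> \<gamma> t = - (t powr (-\<delta>)) - t powr (-\<gamma>)"

definition fsing' :: "real \<Rightarrow> real \<Rightarrow> real \<Rightarrow> real" where
  "fsing' \<delta> \<gamma> t = \<delta> * t powr (-\<delta> - 1) + \<gamma> * t powr (-\<gamma> - 1)"

text \<open>Weak solution of -div(w |\<nabla>u|^(p-2) \<nabla>u) = g f(u).\<close>
definition weak_solution ::
  "real \<Rightarrow> real \<Rightarrow> real \<Rightarrow> ('a::euclidean_space \<Rightarrow> real) \<Rightarrow> ('a \<Rightarrow> real) \<Rightarrow> ('a \<Rightarrow> real) \<Rightarrow> bool" where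
  "weak_solution p \<delta> \<gamma> w g u \<longleftrightarrow> C1_fun u \<and>
     (\<forall>\<phi>. C1c_fun \<phi> \<longrightarrow>
        (\<integral>x. w x * rpow (norm (grad u x)) (p - 2) * (grad u x \<bullet> grad \<phi> x) \<partial>lebesgue)
        = (\<integral>x. g x * fsing \<delta> \<gamma> (u x) * \<phi> x \<partial>lebesgue))"

definition stable_solution ::
  "real \<Rightarrow> real \<Rightarrow> real \<Rightarrow> ('a::euclidean_space \<Rightarrow> real) \<Rightarrow> ('a \<Rightarrow> real) \<Rightarrow> ('a \<Rightarrow> real) \<Rightarrow> bool" where
  "stable_solution p \<delta> \<gamma> w g u \<longleftrightarrow>
     (\<forall>\<phi>. C1c_fun \<phi> \<longrightarrow>
        (\<integral>x. w x * rpow (norm (grad u x)) (p - 2) * (norm (grad \<phi> x))\<^sup>2 \<partial>lebesgue)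
        + (p - 2) * (\<integral>x. (if grad u x = 0 then 0
              else w x * norm (grad u x) powr (p - 4) * (grad u x \<bullet> grad \<phi> x)\<^sup>2) \<partial>lebesgue)
        - (\<integral>x. g x * fsing' \<delta> \<gamma> (u x) * (\<phi> x)\<^sup>2 \<partial>lebesgue) \<ge> 0)"

definition class_Pa :: "real \<Rightarrow> real \<Rightarrow> bool" where
  "class_Pa \<delta> p \<longleftrightarrow> (2 \<le> p \<and> p < 3 \<and> \<delta> \<ge> 1) \<or> (p = 3 \<and> \<delta> > 1) \<or> (p > 3 \<and> \<delta> > (p - 1)\<^sup>2 / 4)"

definition s_p :: "real \<Rightarrow> real \<Rightarrow> real" where
  "s_p \<delta> p = (if p = 2 then \<delta> + sqrt (\<delta>\<^sup>2 + \<delta>) else 2 * \<delta> / (p - 1) - (p - 1) / 2)"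

definition S_pa :: "real \<Rightarrow> real \<Rightarrow> real" where
  "S_pa \<delta> p = 1 + 2 * s_p \<delta> p / (p - 1 + \<delta>)"

end

theory Submission
  imports Defs
begin


definition has_grad :: "('a::euclidean_space \<Rightarrow> real) \<Rightarrow> 'a \<Rightarrow> 'a \<Rightarrow> bool" where
  "has_grad f v x \<longleftrightarrow> (f has_derivative (\<lambda>h. v \<bullet> h)) (at x)"

lemma grad_eqI: assumes "has_grad f v x" shows "grad f x = v"
proof -
  have "frechet_derivative f (at x) = (\<lambda>h. v \<bullet> h)"
    using frechet_derivative_at assms unfolding has_grad_def by metis
  then have "grad f x = (\<Sum>b\<in>Basis. (v \<bullet> b) *\<^sub>R b)" unfolding grad_def by (simp add: inner_commute)
  then show ?thesis by (simp add: euclidean_representation)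
qed

lemma has_grad_grad: assumes "f differentiable (at x)" shows "has_grad f (grad f x) x"
proof -
  let ?F = "frechet_derivative f (at x)"
  have d: "(f has_derivative ?F) (at x)" using assms frechet_derivative_works by blast
  then have lin: "linear ?F" using has_derivative_linear by blast
  have "?F h = grad f x \<bullet> h" for h
  proof -
    have "?F h = ?F (\<Sum>b\<in>Basis. (h \<bullet> b) *\<^sub>R b)" by (simp add: euclidean_representation)
    also have "\<dots> = (\<Sum>b\<in>Basis. (h \<bullet> b) * ?F b)" using lin by (simp add: linear_sum linear_scale)
    also have "\<dots> = grad f x \<bullet> h" unfolding grad_def inner_sum_left
      by (auto intro!: sum.cong simp: inner_commute)
    finally show ?thesis .
  qed
  then have "?F = (\<lambda>h. grad f x \<bullet> h)" by auto
  then show ?thesis using d unfolding has_grad_def by simp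
qed

lemma has_grad_differentiable: "has_grad f v x \<Longrightarrow> f differentiable (at x)"
  unfolding has_grad_def differentiable_def by blast

lemma has_grad_mult:
  assumes "has_grad f v x" "has_grad g w x"
  shows "has_grad (\<lambda>y. f y * g y) (f x *\<^sub>R w + g x *\<^sub>R v) x"
proof -
  have "((\<lambda>y. f y * g y) has_derivative (\<lambda>h. f x * (w \<bullet> h) + (v \<bullet> h) * g x)) (at x)"
    using has_derivative_mult[OF assms[unfolded has_grad_def]] by simp
  then show ?thesis unfolding has_grad_def
    by (rule has_derivative_eq_rhs) (auto simp: inner_add_left algebra_simps)
qed

lemma has_grad_compose:
  assumes "has_grad f v x" "(h has_real_derivative d) (at (f x))"
  shows "has_grad (\<lambda>y. h (f y)) (d *\<^sub>R v) x"
proof -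
  have "((\<lambda>y. h (f y)) has_derivative (\<lambda>t. d * t) \<circ> (\<lambda>k. v \<bullet> k)) (at x)"
    using has_derivative_compose[OF assms(1)[unfolded has_grad_def] assms(2)[unfolded has_field_derivative_def]]
    by (simp add: o_def)
  then show ?thesis unfolding has_grad_def
    by (rule has_derivative_eq_rhs) (auto simp: o_def)
qed

lemma has_grad_norm2: "has_grad (\<lambda>y. (norm y)^2) (2 *\<^sub>R x) x"
proof -
  have "((\<lambda>y. y \<bullet> y) has_derivative (\<lambda>h. x \<bullet> h + h \<bullet> x)) (at x)"
    by (rule has_derivative_inner[OF has_derivative_ident has_derivative_ident])
  then show ?thesis unfolding has_grad_def power2_norm_eq_inner
    by (rule has_derivative_eq_rhs) (auto simp: inner_commute)
qed

lemma has_grad_cong: "has_grad f v x \<Longrightarrow> (\<And>y. f y = g y) \<Longrightarrow> has_grad g v x"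
proof -
  assume "has_grad f v x" "\<And>y. f y = g y"
  then have "f = g" by auto
  with \<open>has_grad f v x\<close> show ?thesis by simp
qed


lemma H_deriv:
  assumes k: "k \<ge> 2"
  shows "((\<lambda>t::real. (max 0 t)^k) has_real_derivative (real k * (max 0 t)^(k-1))) (at t)"
proof (cases "t > 0")
  case True
  have "((\<lambda>t::real. t^k) has_real_derivative (real k * t^(k-1))) (at t)"
    using DERIV_pow[of k t] by simp
  then have "((\<lambda>t::real. (max 0 t)^k) has_real_derivative (real k * t^(k-1))) (at t)"
    apply (rule has_field_derivative_transform_within_open[where S="{0<..}"])
    using True by auto
  then show ?thesis using True by simp
next
  case False
  show ?thesis
  proof (cases "t < 0")
    case True
    have "((\<lambda>t::real. 0) has_real_derivative 0) (at t)" by simp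
    then have "((\<lambda>t::real. (max 0 t)^k) has_real_derivative 0) (at t)"
      apply (rule has_field_derivative_transform_within_open[where S="{..<0}"])
      using True k by auto
    then show ?thesis using True k by (simp add: power_0_left)
  next
    case False
    with \<open>\<not> t > 0\<close> have t0: "t = 0" by auto
    have "((\<lambda>h::real. ((max 0 (0 + h))^k - (max 0 0)^k) / h) \<longlongrightarrow> 0) (at 0)"
    proof (rule Lim_null_comparison)
      show "\<forall>\<^sub>F h in at (0::real). norm (((max 0 (0 + h))^k - (max 0 0)^k) / h) \<le> \<bar>h\<bar>"
      proof -
      have ev: "\<forall>\<^sub>F h in at (0::real). h \<in> ball 0 1 \<and> h \<noteq> 0 \<and> h \<in> UNIV"
        by (rule eventually_at_ball') simp
      show ?thesis
      proof (rule eventually_mono[OF ev])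
        fix h :: real assume h0: "h \<in> ball 0 1 \<and> h \<noteq> 0 \<and> h \<in> UNIV"
        then have h: "h \<in> ball 0 1" "h \<noteq> 0" by auto
        have a: "\<bar>max 0 h\<bar> \<le> \<bar>h\<bar>" by auto
        have b: "\<bar>h\<bar> \<le> 1" using h by auto
        have "\<bar>(max 0 h)^k\<bar> = \<bar>max 0 h\<bar>^k" by (simp add: power_abs)
        also have "\<dots> \<le> \<bar>h\<bar>^k" using a by (simp add: power_mono)
        also have "\<dots> \<le> \<bar>h\<bar>^2" using b k by (intro power_decreasing) auto
        finally have "\<bar>(max 0 h)^k\<bar> \<le> \<bar>h\<bar> * \<bar>h\<bar>" by (simp add: power2_eq_square)
        then show "norm (((max 0 (0 + h))^k - (max 0 0)^k) / h) \<le> \<bar>h\<bar>" using h k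
          by (simp add: abs_divide divide_le_eq power_0_left)
      qed
      qed
      show "((\<lambda>h::real. \<bar>h\<bar>) \<longlongrightarrow> 0) (at 0)"
        using tendsto_rabs[OF tendsto_ident_at[of "0::real" UNIV]] by simp
    qed
    then have "((\<lambda>t::real. (max 0 t)^k) has_real_derivative 0) (at 0)"
      unfolding DERIV_def by simp
    then show ?thesis using t0 k by (simp add: power_0_left)
  qed
qed

definition eta :: "real \<Rightarrow> 'a::euclidean_space \<Rightarrow> real" where
  "eta R x = max 0 (1 - (norm x)^2 / (4*R^2))"

definition psi :: "nat \<Rightarrow> real \<Rightarrow> 'a::euclidean_space \<Rightarrow> real" where
  "psi k R x = eta R x ^ k"

definition gpsi :: "nat \<Rightarrow> real \<Rightarrow> 'a::euclidean_space \<Rightarrow> 'a" where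
  "gpsi k R x = (- real k * eta R x ^ (k-1) / (2*R^2)) *\<^sub>R x"

lemma psi_has_grad:
  assumes k: "k \<ge> 2" and R: "R > 0"
  shows "has_grad (psi k R) (gpsi k R x) x"
proof -
  have h1: "has_grad (\<lambda>y. 1 - (norm y)^2 / (4*R^2)) ((- 1/(4*R^2)) *\<^sub>R (2 *\<^sub>R x)) x"
  proof (rule has_grad_compose[OF has_grad_norm2, where h="\<lambda>t. 1 - t/(4*R^2)"])
    show "((\<lambda>t. 1 - t / (4 * R\<^sup>2)) has_real_derivative - 1 / (4 * R\<^sup>2)) (at ((norm x)^2))"
      using R by (auto intro!: derivative_eq_intros simp: eval_nat_numeral field_simps)
  qed
  have "has_grad (\<lambda>y. (max 0 (1 - (norm y)^2 / (4*R^2)))^k)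
      ((real k * (max 0 (1 - (norm x)^2 / (4*R^2)))^(k-1)) *\<^sub>R ((- 1/(4*R^2)) *\<^sub>R (2 *\<^sub>R x))) x"
    by (rule has_grad_compose[OF h1 H_deriv[OF k]])
  then show ?thesis unfolding psi_def eta_def gpsi_def
    using R by (simp add: field_simps)
qed

lemma eta_range: "0 \<le> eta R x" "eta R x \<le> 1"
  unfolding eta_def by (auto simp: field_simps)

lemma eta_zero: assumes "R > 0" "norm x \<ge> 2*R" shows "eta R x = 0"
proof -
  have "(2*R)^2 \<le> (norm x)^2" using assms by (intro power_mono) auto
  then have "4*R^2 \<le> (norm x)^2" by (simp add: power_mult_distrib)
  then show ?thesis unfolding eta_def using assms by (simp add: field_simps)
qed

lemma eta_pos_norm: assumes "R > 0" "eta R x > 0" shows "norm x < 2*R"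
  using eta_zero[OF assms(1), of x] assms by force

lemma eta_mono: assumes "0 < R" "R \<le> R'" shows "eta R x \<le> eta R' x"
proof -
  have "R^2 \<le> R'^2" using assms by (intro power_mono) auto
  then have "(norm x)^2 / (4*R'^2) \<le> (norm x)^2 / (4*R^2)"
    using assms by (intro divide_left_mono) auto
  then show ?thesis unfolding eta_def by auto
qed

lemma eta_ball1: assumes "1 \<le> R" "norm x < 1" shows "eta R x \<ge> 3/4"
proof -
  have "(norm x)^2 \<le> 1" using assms by (simp add: power_le_one)
  moreover have "1 \<le> R^2" using assms by (simp add: one_le_power)
  ultimately have "(norm x)^2 / (4*R^2) \<le> 1/4" by (simp add: divide_le_eq)
  then show ?thesis unfolding eta_def by auto
qed

lemma gpsi_bound:
  assumes k: "k \<ge> 2" and R: "R > 0"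
  shows "norm (gpsi k R x) \<le> real k * eta R x ^ (k-1) / R"
proof (cases "eta R x > 0")
  case True
  have nx: "norm x \<le> 2*R" using eta_pos_norm[OF R True] by simp
  have "norm (gpsi k R x) = real k * eta R x ^ (k-1) / (2*R^2) * norm x"
    unfolding gpsi_def using eta_range[of R x] by (simp add: abs_mult)
  also have "\<dots> \<le> real k * eta R x ^ (k-1) / (2*R^2) * (2*R)"
    using nx eta_range[of R x] R by (intro mult_left_mono) auto
  also have "\<dots> = real k * eta R x ^ (k-1) / R" using R by (simp add: power2_eq_square field_simps)
  finally show ?thesis .
next
  case False
  then have "eta R x = 0" using eta_range[of R x] by auto
  moreover have "(0::real) ^ (k - Suc 0) = 0" using k by simp
  ultimately show ?thesis unfolding gpsi_def using k by (simp add: power_0_left)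
qed

lemma continuous_eta: "R > 0 \<Longrightarrow> continuous_on UNIV (eta R)"
  unfolding eta_def by (intro continuous_intros) auto

lemma continuous_gpsi: "R > 0 \<Longrightarrow> continuous_on UNIV (gpsi k R)"
  unfolding gpsi_def by (intro continuous_intros continuous_eta) auto

lemma psi_support: assumes "R > 0" "k \<ge> 1" shows "closure {x. psi k R x \<noteq> 0} \<subseteq> cball 0 (2*R)"
proof -
  have "{x. psi k R x \<noteq> 0} \<subseteq> cball 0 (2*R)"
  proof
    fix x assume "x \<in> {x. psi k R x \<noteq> 0}"
    then have "eta R x \<noteq> 0" unfolding psi_def using assms(2) by (auto simp: power_0_left)
    then show "x \<in> cball 0 (2*R)" using eta_zero[OF assms(1), of x] by force
  qed
  then show ?thesis by (intro closure_minimal) auto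
qed


lemma C1_has_grad: "C1_fun u \<Longrightarrow> has_grad u (grad u x) x"
  unfolding C1_fun_def by (simp add: has_grad_grad)

lemma C1_cont: "C1_fun u \<Longrightarrow> continuous_on UNIV u"
  unfolding C1_fun_def by (intro differentiable_imp_continuous_on) (simp add: differentiable_on_def differentiable_at_withinI)

lemma C1_grad_cont: "C1_fun u \<Longrightarrow> continuous_on UNIV (grad u)"
  unfolding C1_fun_def by simp

lemma psi_C1: assumes "k \<ge> 2" "R > 0" shows "C1_fun (psi k R)" "grad (psi k R) = gpsi k R"
proof -
  show g: "grad (psi k R) = gpsi k R" using grad_eqI[OF psi_has_grad[OF assms]] by auto
  show "C1_fun (psi k R)" unfolding C1_fun_def g
    using has_grad_differentiable[OF psi_has_grad[OF assms]] continuous_gpsi[OF assms(2)] by auto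
qed

lemma continuous_psi: "R > 0 \<Longrightarrow> continuous_on UNIV (psi k R)"
  unfolding psi_def by (intro continuous_intros continuous_eta)

definition TG :: "('a::euclidean_space \<Rightarrow> real) \<Rightarrow> real \<Rightarrow> nat \<Rightarrow> nat \<Rightarrow> real \<Rightarrow> 'a \<Rightarrow> 'a" where
  "TG u \<beta> j k R x = (u x powr \<beta>) *\<^sub>R ((real j * psi k R x^(j-1)) *\<^sub>R gpsi k R x)
       + (psi k R x ^ j) *\<^sub>R ((\<beta> * u x powr (\<beta> - 1)) *\<^sub>R grad u x)"

lemma tf_has_grad:
  assumes u: "C1_fun u" "\<forall>x. u x > 0" and k: "k \<ge> 2" and R: "R > 0"
  shows "has_grad (\<lambda>x. u x powr \<beta> * psi k R x ^ j) (TG u \<beta> j k R x) x"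
proof -
  have a: "has_grad (\<lambda>x. u x powr \<beta>) ((\<beta> * u x powr (\<beta> - 1)) *\<^sub>R grad u x) x"
    by (rule has_grad_compose[OF C1_has_grad[OF u(1)] has_real_derivative_powr]) (use u in auto)
  have b: "has_grad (\<lambda>x. psi k R x ^ j) ((real j * psi k R x^(j-1)) *\<^sub>R gpsi k R x) x"
    by (rule has_grad_compose[OF psi_has_grad[OF k R], where h="\<lambda>t. t^j"]) (use DERIV_pow[of j "psi k R x"] in \<open>simp only: One_nat_def\<close>)
  show ?thesis using has_grad_mult[OF a b] unfolding TG_def by simp
qed

lemma tf_C1c:
  assumes u: "C1_fun u" "\<forall>x. u x > 0" and k: "k \<ge> 2" and R: "R > 0" and j: "j \<ge> 1"
  shows "C1c_fun (\<lambda>x. u x powr \<beta> * psi k R x ^ j)"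
    "grad (\<lambda>x. u x powr \<beta> * psi k R x ^ j) = TG u \<beta> j k R"
proof -
  show g: "grad (\<lambda>x. u x powr \<beta> * psi k R x ^ j) = TG u \<beta> j k R"
    using grad_eqI[OF tf_has_grad[OF assms(1-4)]] by auto
  have cu: "continuous_on UNIV u" by (rule C1_cont[OF u(1)])
  have upos: "\<forall>x\<in>UNIV. u x \<noteq> 0" using u(2) by (simp add: less_imp_neq[symmetric])
  have cont: "continuous_on UNIV (TG u \<beta> j k R)"
    unfolding TG_def
    by (intro continuous_intros cu continuous_psi[OF R] continuous_gpsi[OF R] C1_grad_cont[OF u(1)])
       (use upos in auto)
  have C1: "C1_fun (\<lambda>x. u x powr \<beta> * psi k R x ^ j)"
    unfolding C1_fun_def g using has_grad_differentiable[OF tf_has_grad[OF assms(1-4)]] cont by auto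
  have sub: "{x. u x powr \<beta> * psi k R x ^ j \<noteq> 0} \<subseteq> {x. psi k R x \<noteq> 0}" using j by auto
  have "closure {x. u x powr \<beta> * psi k R x ^ j \<noteq> 0} \<subseteq> cball 0 (2*R)"
    using closure_mono[OF sub] psi_support[OF R, of k] k by auto
  then have "bounded (closure {x. u x powr \<beta> * psi k R x ^ j \<noteq> 0})"
    by (rule bounded_subset[OF bounded_cball])
  then have "compact (closure {x. u x powr \<beta> * psi k R x ^ j \<noteq> 0})"
    using compact_eq_bounded_closed closed_closure by blast
  then show "C1c_fun (\<lambda>x. u x powr \<beta> * psi k R x ^ j)" unfolding C1c_fun_def using C1 by auto
qed


lemma cont_meas: "continuous_on UNIV h \<Longrightarrow> (h::'a::euclidean_space \<Rightarrow> 'b::euclidean_space) \<in> borel_measurable lebesgue"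
  using continuous_imp_measurable_on_sets_lebesgue[of UNIV h] by (simp add: lebesgue_on_UNIV_eq)

lemma loc_meas:
  fixes f :: "'a::euclidean_space \<Rightarrow> real"
  assumes loc: "\<forall>K. compact K \<longrightarrow> set_integrable lebesgue K f"
  shows "f \<in> borel_measurable lebesgue"
proof (rule borel_measurable_LIMSEQ_real)
  fix n :: nat
  have "set_integrable lebesgue (cball 0 (real n)) f" using loc by auto
  then show "(\<lambda>x. indicator (cball 0 (real n)) x * f x) \<in> borel_measurable lebesgue"
    unfolding set_integrable_def by (simp add: borel_measurable_integrable)
next
  fix x :: 'a
  have "\<forall>\<^sub>F n in sequentially. indicator (cball 0 (real n)) x * f x = f x"
    unfolding eventually_sequentially
  proof (intro exI allI impI)
    fix n assume "nat \<lceil>norm x\<rceil> \<le> n"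
    then have "norm x \<le> real n" by linarith
    then show "indicator (cball 0 (real n)) x * f x = f x" by (simp add: indicator_def)
  qed
  then show "(\<lambda>n. indicator (cball 0 (real n)) x * f x) \<longlonglongrightarrow> f x"
    by (rule tendsto_eventually)
qed

lemma integrable_loc:
  fixes f :: "'a::euclidean_space \<Rightarrow> real"
  assumes loc: "\<forall>K. compact K \<longrightarrow> set_integrable lebesgue K f"
    and hc: "continuous_on UNIV h" and hz: "\<And>x. norm x > r \<Longrightarrow> h x = 0"
  shows "integrable lebesgue (\<lambda>x. f x * h x)"
proof -
  have "compact (h ` cball 0 r)" by (rule compact_continuous_image[OF continuous_on_subset[OF hc]]) auto
  then obtain B where B: "\<And>y. y \<in> h ` cball 0 r \<Longrightarrow> norm y \<le> B"
    using compact_imp_bounded bounded_iff by metis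
  have si: "set_integrable lebesgue (cball 0 r) f" using loc by auto
  then have i1: "integrable lebesgue (\<lambda>x. B * (indicator (cball 0 r) x * f x))"
    unfolding set_integrable_def by simp
  show ?thesis
  proof (rule Bochner_Integration.integrable_bound[OF i1])
    show "(\<lambda>x. f x * h x) \<in> borel_measurable lebesgue"
      using loc_meas[OF loc] cont_meas[OF hc] by measurable
    show "AE x in lebesgue. norm (f x * h x) \<le> norm (B * (indicator (cball 0 r) x * f x))"
    proof (intro AE_I2)
      fix x
      show "norm (f x * h x) \<le> norm (B * (indicator (cball 0 r) x * f x))"
      proof (cases "norm x \<le> r")
        case True
        then have "\<bar>h x\<bar> \<le> B" using B[of "h x"] by auto
        then have "\<bar>f x\<bar> * \<bar>h x\<bar> \<le> \<bar>f x\<bar> * \<bar>B\<bar>" by (intro mult_left_mono) auto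
        then show ?thesis using True by (simp add: indicator_def abs_mult mult.commute)
      next
        case False
        then show ?thesis using hz[of x] by simp
      qed
    qed
  qed
qed


lemma young_theta:
  fixes T1 T2 \<theta> \<epsilon> :: real
  assumes "0 \<le> T1" "0 \<le> T2" "0 < \<theta>" "\<theta> < 1" "0 < \<epsilon>"
  shows "T1 powr \<theta> * T2 powr (1-\<theta>) \<le> \<epsilon> * T1 + ((1-\<theta>) * (\<epsilon>/\<theta>) powr (-\<theta>/(1-\<theta>))) * T2"
proof (cases "T1 = 0 \<or> T2 = 0")
  case True
  have "0 \<le> ((1-\<theta>) * (\<epsilon>/\<theta>) powr (-\<theta>/(1-\<theta>))) * T2" using assms by auto
  then show ?thesis using True assms by auto
next
  case False
  then have p1: "T1 > 0" "T2 > 0" using assms by auto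
  define c where "c = \<epsilon>/\<theta>"
  have c: "c > 0" unfolding c_def using assms by auto
  have "(c*T1) powr \<theta> * (c powr (-\<theta>/(1-\<theta>)) * T2) powr (1-\<theta>)
       = c powr \<theta> * c powr (-\<theta>) * (T1 powr \<theta> * T2 powr (1-\<theta>))"
    using c p1 assms by (simp add: powr_mult powr_powr)
  also have "\<dots> = T1 powr \<theta> * T2 powr (1-\<theta>)"
    using c by (simp add: powr_add[symmetric])
  finally have eq: "T1 powr \<theta> * T2 powr (1-\<theta>) = (c*T1) powr \<theta> * (c powr (-\<theta>/(1-\<theta>)) * T2) powr (1-\<theta>)" by simp
  have "(c*T1) powr \<theta> * (c powr (-\<theta>/(1-\<theta>)) * T2) powr (1-\<theta>) \<le> \<theta> * (c*T1) + (1-\<theta>) * (c powr (-\<theta>/(1-\<theta>)) * T2)"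
    by (rule Youngs_inequality_0) (use assms c p1 in auto)
  also have "\<dots> = \<epsilon> * T1 + ((1-\<theta>) * (\<epsilon>/\<theta>) powr (-\<theta>/(1-\<theta>))) * T2"
    unfolding c_def using assms by (simp add: field_simps)
  finally show ?thesis using eq by simp
qed

lemma amgm_eps:
  fixes a1 b1 \<epsilon> :: real
  assumes "\<epsilon> > 0"
  shows "a1 * b1 \<le> \<epsilon> * a1^2 + b1^2 / (4*\<epsilon>)"
proof -
  have "0 \<le> (2 * \<epsilon> * a1 - b1)^2 / (4*\<epsilon>)" using assms by simp
  also have "(2 * \<epsilon> * a1 - b1)^2 / (4*\<epsilon>) = \<epsilon> * a1^2 + b1^2 / (4*\<epsilon>) - a1 * b1"
    using assms by (simp add: field_simps power2_eq_square)
  finally show ?thesis by simp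
qed

lemma norm2_comb:
  fixes v z :: "'a::real_inner"
  shows "(norm (a *\<^sub>R v + b *\<^sub>R z))^2 = a^2 * (norm v)^2 + 2*a*b*(v \<bullet> z) + b^2 * (norm z)^2"
  unfolding power2_norm_eq_inner by (simp add: inner_add_left inner_add_right inner_commute algebra_simps power2_eq_square)

lemma pos_exp_powr: assumes "(x::real) > 0" shows "x powr s = exp (s * ln x)"
  using assms by (simp add: powr_def)

lemma pos_exp_pow: "(x::real) > 0 \<Longrightarrow> x ^ n = exp (real n * ln x)"
  by (metis exp_ln exp_of_nat_mult)

lemma exp_powr: "exp (a::real) powr s = exp (s * a)"
  by (simp add: powr_def)


definition youngC :: "real \<Rightarrow> real \<Rightarrow> real" where
  "youngC \<theta> \<epsilon> = (1-\<theta>) * (\<epsilon>/\<theta>) powr (-\<theta>/(1-\<theta>))"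

lemma youngC_nonneg: "\<theta> < 1 \<Longrightarrow> 0 \<le> youngC \<theta> \<epsilon>"
  unfolding youngC_def by simp

lemma young_D:
  fixes G U e R p \<alpha> \<epsilon> :: real and k :: nat
  assumes p: "p > 2" and G: "G \<ge> 0" and U: "U > 0" and e: "e \<ge> 0" and R: "R > 0"
    and k: "2*real k > p" "k \<ge> 2" and eps: "\<epsilon> > 0"
  shows "G powr (p-2) * U powr (-2*\<alpha>) * (e^(2*k-2) / R^2)
     \<le> \<epsilon> * (G powr (p-2) * G^2 * U powr (-2*\<alpha>-2) * e^(2*k))
       + youngC ((p-2)/p) \<epsilon> * (U powr (-(2*\<alpha>+2-p)) * e powr (2*real k - p) * R powr (-p))"
proof (cases "G = 0 \<or> e = 0")
  case True
  have z: "G powr (p-2) * U powr (-2*\<alpha>) * (e^(2*k-2) / R^2) = 0"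
    using True p k by auto
  have "0 \<le> youngC ((p-2)/p) \<epsilon> * (U powr (-(2*\<alpha>+2-p)) * e powr (2*real k - p) * R powr (-p))"
    using p by (intro mult_nonneg_nonneg youngC_nonneg) auto
  moreover have "0 \<le> \<epsilon> * (G powr (p-2) * G^2 * U powr (-2*\<alpha>-2) * e^(2*k))"
    using eps G e by auto
  ultimately show ?thesis using z by linarith
next
  case False
  then have G': "G > 0" and e': "e > 0" using G e by auto
  define \<theta> where "\<theta> = (p-2)/p"
  have th: "0 < \<theta>" "\<theta> < 1" using p unfolding \<theta>_def by auto
  define E2 where "E2 = p * ln G + (-2*\<alpha>-2) * ln U + 2 * real k * ln e"
  define E3 where "E3 = (-(2*\<alpha>+2-p)) * ln U + (2*real k - p) * ln e + (-p) * ln R"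
  have T1: "G powr (p-2) * G^2 * U powr (-2*\<alpha>-2) * e^(2*k) = exp E2"
    using G' U e' unfolding E2_def
    by (simp add: pos_exp_powr pos_exp_pow mult_exp_exp algebra_simps)
  have T2: "U powr (-(2*\<alpha>+2-p)) * e powr (2*real k - p) * R powr (-p) = exp E3"
    using G' U e' R unfolding E3_def
    by (simp add: pos_exp_powr pos_exp_pow mult_exp_exp algebra_simps)
  have ex: "(p-2) * ln G + (-2*\<alpha>) * ln U + (2*real k - 2) * ln e + (-2) * ln R = \<theta> * E2 + (1-\<theta>) * E3"
    unfolding \<theta>_def E2_def E3_def using p by (simp add: field_simps)
  have rk: "real (2*k-2) = 2*real k - 2" using k by simp
  have f1: "G powr (p-2) = exp ((p-2) * ln G)" using G' by (simp add: pos_exp_powr)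
  have f2: "U powr (-2*\<alpha>) = exp ((-2*\<alpha>) * ln U)" using U by (simp add: pos_exp_powr)
  have f3: "e^(2*k-2) = exp ((2*real k - 2) * ln e)" using e' pos_exp_pow[OF e', of "2*k-2"] rk by simp
  have f4: "R^2 = exp (2 * ln R)" using pos_exp_pow[OF R, of 2] by simp
  have L: "G powr (p-2) * U powr (-2*\<alpha>) * (e^(2*k-2) / R^2) = exp (\<theta> * E2 + (1-\<theta>) * E3)"
    unfolding f1 f2 f3 f4 ex[symmetric] by (simp add: mult_exp_exp exp_diff[symmetric] algebra_simps)
  have "exp (\<theta> * E2 + (1-\<theta>) * E3) = (exp E2) powr \<theta> * (exp E3) powr (1-\<theta>)"
    by (simp add: exp_powr mult_exp_exp)
  also have "\<dots> \<le> \<epsilon> * exp E2 + youngC \<theta> \<epsilon> * exp E3"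
    unfolding youngC_def by (rule young_theta) (use th eps in auto)
  finally show ?thesis using L T1 T2 unfolding \<theta>_def by simp
qed


lemma young_T:
  fixes W U e R p a b \<epsilon> :: real and k :: nat
  assumes W: "W > 0" and U: "U > 0" and e: "e \<ge> 0" "e \<le> 1" and R: "R > 0"
    and a: "a > 0" "b > a" and k: "2*real k > p"
    and m: "(b/(b-a)) * (2*real k - p - 2*real k*a/b) \<ge> 0" and eps: "\<epsilon> > 0"
  shows "W * U powr (-a) * e powr (2*real k - p) * R powr (-p)
     \<le> \<epsilon> * (U powr (-b) * e^(2*k)) + youngC (a/b) \<epsilon> * (W powr (b/(b-a)) * R powr (-p*(b/(b-a))))"
proof (cases "e = 0")
  case True
  have "0 \<le> youngC (a/b) \<epsilon> * (W powr (b/(b-a)) * R powr (-p*(b/(b-a))))"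
    using a by (intro mult_nonneg_nonneg youngC_nonneg) auto
  moreover have "0 \<le> \<epsilon> * (U powr (-b) * e^(2*k))" using eps e by auto
  ultimately show ?thesis using True by auto
next
  case False
  then have e': "e > 0" using e by auto
  define S where "S = b/(b-a)"
  define m where "m = S * (2*real k - p - 2*real k*a/b)"
  define \<theta> where "\<theta> = a/b"
  have th: "0 < \<theta>" "\<theta> < 1" using a unfolding \<theta>_def by auto
  define E2 where "E2 = (-b) * ln U + 2 * real k * ln e"
  define E3 where "E3 = S * ln W + m * ln e + (-p*S) * ln R"
  have T1: "U powr (-b) * e^(2*k) = exp E2"
    using U e' unfolding E2_def
    by (simp add: pos_exp_powr pos_exp_pow mult_exp_exp algebra_simps)
  have T2: "W powr S * e powr m * R powr (-p*S) = exp E3"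
    using W e' R unfolding E3_def
    by (simp add: pos_exp_powr mult_exp_exp algebra_simps)
  have ex: "ln W + (-a) * ln U + (2*real k - p) * ln e + (-p) * ln R = \<theta> * E2 + (1-\<theta>) * E3"
  proof -
    have h1: "(1-\<theta>) * S = 1" unfolding \<theta>_def S_def using a by (simp add: field_simps)
    have h2: "(1-\<theta>)*E3 = ((1-\<theta>)*S) * ln W + ((1-\<theta>)*S) * (2*real k - p - 2*real k*a/b) * ln e + (-p)*((1-\<theta>)*S) * ln R"
      unfolding E3_def m_def by (simp add: algebra_simps)
    have h3: "\<theta> * E2 = (-a) * ln U + (2*real k*a/b) * ln e"
      unfolding E2_def \<theta>_def using a by (simp add: field_simps)
    show ?thesis unfolding h3 h2 h1 by (simp add: algebra_simps)
  qed
  have L: "W * U powr (-a) * e powr (2*real k - p) * R powr (-p) = exp (\<theta> * E2 + (1-\<theta>) * E3)"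
  proof -
    have "exp (ln W) * U powr (-a) * e powr (2*real k - p) * R powr (-p)
       = exp (ln W + (-a) * ln U + (2*real k - p) * ln e + (-p) * ln R)"
      using U e' R by (simp del: exp_ln add: pos_exp_powr mult_exp_exp algebra_simps)
    then show ?thesis unfolding ex[symmetric] using W by simp
  qed
  have "exp (\<theta> * E2 + (1-\<theta>) * E3) = (exp E2) powr \<theta> * (exp E3) powr (1-\<theta>)"
    by (simp add: exp_powr mult_exp_exp)
  also have "\<dots> \<le> \<epsilon> * exp E2 + youngC \<theta> \<epsilon> * exp E3"
    unfolding youngC_def by (rule young_theta) (use th eps in auto)
  finally have 1: "W * U powr (-a) * e powr (2*real k - p) * R powr (-p)
      \<le> \<epsilon> * (U powr (-b) * e^(2*k)) + youngC \<theta> \<epsilon> * (W powr S * e powr m * R powr (-p*S))"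
    using L T1 T2 by simp
  have "e powr m \<le> 1" using e' e m unfolding m_def S_def
    by (intro powr_le1) auto
  then have "(W powr S * R powr (-p*S)) * e powr m \<le> (W powr S * R powr (-p*S)) * 1"
    by (intro mult_left_mono) auto
  then have "W powr S * e powr m * R powr (-p*S) \<le> W powr S * R powr (-p*S)"
    by (simp add: algebra_simps)
  then have "youngC \<theta> \<epsilon> * (W powr S * e powr m * R powr (-p*S)) \<le> youngC \<theta> \<epsilon> * (W powr S * R powr (-p*S))"
    using th by (intro mult_left_mono youngC_nonneg) auto
  then show ?thesis using 1 unfolding \<theta>_def S_def by linarith
qed


locale setting =
  fixes u w g :: "'a::euclidean_space \<Rightarrow> real" and p \<delta> \<alpha> :: real and k :: nat
  assumes uC1: "C1_fun u" and upos: "\<forall>x. 0 < u x"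
    and w_loc: "\<forall>K. compact K \<longrightarrow> set_integrable lebesgue K w"
    and g_loc: "\<forall>K. compact K \<longrightarrow> set_integrable lebesgue K g"
    and p2: "p \<ge> 2" and kk: "k \<ge> 2"
begin

definition "Gn x = norm (grad u x)"
definition "P x = rpow (Gn x) (p-2)"
definition "fA R x = w x * P x * (Gn x)^2 * u x powr (-2*\<alpha>-2) * psi k R x ^ 2"
definition "fX R x = w x * P x * u x powr (-2*\<alpha>-1) * psi k R x * (grad u x \<bullet> gpsi k R x)"
definition "fD R x = w x * P x * u x powr (-2*\<alpha>) * (norm (gpsi k R x))^2"
definition "fY R x = w x * P x * Gn x * u x powr (-2*\<alpha>-1) * psi k R x * norm (gpsi k R x)"
definition "fB R x = g x * u x powr (-(\<delta>+2*\<alpha>+1)) * psi k R x ^ 2"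
definition "fT R x = w x * u x powr (-(2*\<alpha>+2-p)) * eta R x powr (2*real k - p) * R powr (-p)"

lemma cont_u: "continuous_on UNIV u" using C1_cont[OF uC1] .
lemma cont_gu: "continuous_on UNIV (grad u)" using C1_grad_cont[OF uC1] .
lemma unz: "\<forall>x\<in>UNIV. u x \<noteq> 0" using upos by (simp add: less_imp_neq[symmetric])

lemma cont_Gn: "continuous_on UNIV Gn"
  unfolding Gn_def by (intro continuous_on_norm cont_gu)

lemma cont_P: "continuous_on UNIV P"
proof (cases "p = 2")
  case True then show ?thesis unfolding P_def rpow_def by simp
next
  case False
  then have "P = (\<lambda>x. Gn x powr (p-2))" unfolding P_def rpow_def by auto
  moreover have "continuous_on UNIV (\<lambda>x. Gn x powr (p-2))"
    by (rule continuous_on_powr'[OF cont_Gn continuous_on_const]) (use False p2 in \<open>auto simp: Gn_def\<close>)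
  ultimately show ?thesis by simp
qed

lemma cont_upow: "continuous_on UNIV (\<lambda>x. u x powr s)"
  by (rule continuous_on_powr[OF cont_u continuous_on_const unz])

lemma outside: assumes "R > 0" "norm x > 2*R"
  shows "eta R x = 0" "psi k R x = 0" "gpsi k R x = 0"
proof -
  show e: "eta R x = 0" by (rule eta_zero[OF assms(1)]) (use assms in simp)
  show "psi k R x = 0" unfolding psi_def e using kk by simp
  have "(0::real) ^ (k - Suc 0) = 0" using kk by (simp add: power_0_left)
  then show "gpsi k R x = 0" unfolding gpsi_def e by simp
qed

lemma int_w: assumes "R > 0" "continuous_on UNIV h" "\<And>x. norm x > 2*R \<Longrightarrow> h x = 0"
  shows "integrable lebesgue (\<lambda>x. w x * h x)"
  by (rule integrable_loc[OF w_loc assms(2,3)])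

lemma int_fA: "R > 0 \<Longrightarrow> integrable lebesgue (fA R)"
proof -
  assume R: "R > 0"
  have "integrable lebesgue (\<lambda>x. w x * (P x * (Gn x)^2 * u x powr (-2*\<alpha>-2) * psi k R x ^ 2))"
    by (rule int_w[OF R]) (auto intro!: continuous_intros cont_P cont_Gn cont_upow continuous_psi R simp: outside[OF R])
  then show ?thesis unfolding fA_def by (simp add: mult.assoc)
qed

lemma int_fX: "R > 0 \<Longrightarrow> integrable lebesgue (fX R)"
proof -
  assume R: "R > 0"
  have "integrable lebesgue (\<lambda>x. w x * (P x * u x powr (-2*\<alpha>-1) * psi k R x * (grad u x \<bullet> gpsi k R x)))"
    by (rule int_w[OF R]) (auto intro!: continuous_intros cont_P cont_upow continuous_psi cont_gu continuous_gpsi R simp: outside[OF R])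
  then show ?thesis unfolding fX_def by (simp add: mult.assoc)
qed

lemma int_fD: "R > 0 \<Longrightarrow> integrable lebesgue (fD R)"
proof -
  assume R: "R > 0"
  have "integrable lebesgue (\<lambda>x. w x * (P x * u x powr (-2*\<alpha>) * (norm (gpsi k R x))^2))"
    by (rule int_w[OF R]) (auto intro!: continuous_intros cont_P cont_upow continuous_gpsi R simp: outside[OF R])
  then show ?thesis unfolding fD_def by (simp add: mult.assoc)
qed

lemma int_fY: "R > 0 \<Longrightarrow> integrable lebesgue (fY R)"
proof -
  assume R: "R > 0"
  have "integrable lebesgue (\<lambda>x. w x * (P x * Gn x * u x powr (-2*\<alpha>-1) * psi k R x * norm (gpsi k R x)))"
    by (rule int_w[OF R]) (auto intro!: continuous_intros cont_P cont_Gn cont_upow continuous_psi continuous_gpsi R simp: outside[OF R])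
  then show ?thesis unfolding fY_def by (simp add: mult.assoc)
qed

lemma int_fT: assumes R: "R > 0" and kp: "2*real k > p" shows "integrable lebesgue (fT R)"
proof -
  have ce: "continuous_on UNIV (\<lambda>x. eta R x powr (2*real k - p))"
    by (rule continuous_on_powr'[OF continuous_eta[OF R] continuous_on_const]) (use kp eta_range in auto)
  have "integrable lebesgue (\<lambda>x. w x * (u x powr (-(2*\<alpha>+2-p)) * eta R x powr (2*real k - p) * R powr (-p)))"
    by (rule int_w[OF R]) (auto intro!: continuous_intros ce cont_upow simp: outside[OF R])
  then show ?thesis unfolding fT_def by (simp add: mult.assoc)
qed

lemma int_fB: "R > 0 \<Longrightarrow> integrable lebesgue (fB R)"
proof -
  assume R: "R > 0"
  have "integrable lebesgue (\<lambda>x. g x * (u x powr (-(\<delta>+2*\<alpha>+1)) * psi k R x ^ 2))"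
    by (rule integrable_loc[OF g_loc, where r="2*R"]) (auto intro!: continuous_intros cont_upow continuous_psi R simp: outside[OF R])
  then show ?thesis unfolding fB_def by (simp add: mult.assoc)
qed

lemma id_weak:
  "w x * rpow (Gn x) (p-2) * (grad u x \<bullet> TG u (-(2*\<alpha>+1)) 2 k R x) = 2 * fX R x - (2*\<alpha>+1) * fA R x"
proof -
  have e: "-(2*\<alpha>+1) - 1 = -2*\<alpha>-2" "-(2*\<alpha>+1) = -2*\<alpha>-1" by simp_all
  have gg: "grad u x \<bullet> grad u x = (Gn x)^2" unfolding Gn_def by (simp add: power2_norm_eq_inner)
  show ?thesis
    unfolding TG_def fX_def fA_def P_def[symmetric] e inner_add_right inner_scaleR_right gg
    by (simp add: algebra_simps power2_eq_square)
qed

lemma id_weakR: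
  "g x * fsing \<delta> \<delta> (u x) * (u x powr (-(2*\<alpha>+1)) * psi k R x ^ 2) = -2 * fB R x"
proof -
  have "u x powr (-\<delta>) * u x powr (-(2*\<alpha>+1)) = u x powr (-(\<delta>+2*\<alpha>+1))"
    using upos by (simp add: powr_add[symmetric] algebra_simps)
  then show ?thesis unfolding fsing_def fB_def by (simp add: algebra_simps)
qed

lemma id_stab1:
  "w x * rpow (Gn x) (p-2) * (norm (TG u (-\<alpha>) 1 k R x))^2 = fD R x - 2*\<alpha> * fX R x + \<alpha>^2 * fA R x"
proof -
  have tg: "TG u (-\<alpha>) 1 k R x = (u x powr (-\<alpha>)) *\<^sub>R gpsi k R x + (psi k R x * (-\<alpha> * u x powr (-\<alpha>-1))) *\<^sub>R grad u x"
    unfolding TG_def by simp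
  have n0: "(norm (TG u (-\<alpha>) 1 k R x))^2 = (u x powr (-\<alpha>))^2 * (norm (gpsi k R x))^2
      + 2 * (u x powr (-\<alpha>)) * (psi k R x * (-\<alpha> * u x powr (-\<alpha>-1))) * (gpsi k R x \<bullet> grad u x)
      + (psi k R x * (-\<alpha> * u x powr (-\<alpha>-1)))^2 * (Gn x)^2"
    unfolding tg Gn_def by (rule norm2_comb)
  have s1: "(u x powr (-\<alpha>))^2 = u x powr (-2*\<alpha>)"
    using upos by (simp add: power2_eq_square powr_add[symmetric])
  have s2: "(u x powr (-\<alpha>-1))^2 = u x powr (-2*\<alpha>-2)"
    using upos by (simp add: power2_eq_square powr_add[symmetric])
  have s3: "u x powr (-\<alpha>) * u x powr (-\<alpha>-1) = u x powr (-2*\<alpha>-1)"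
    using upos by (simp add: powr_add[symmetric])
  have t2: "2 * (u x powr (-\<alpha>)) * (psi k R x * (-\<alpha> * u x powr (-\<alpha>-1))) * (gpsi k R x \<bullet> grad u x)
     = -2*\<alpha> * (psi k R x * (u x powr (-\<alpha>) * u x powr (-\<alpha>-1)) * (grad u x \<bullet> gpsi k R x))"
    by (simp add: algebra_simps inner_commute)
  have t3: "(psi k R x * (-\<alpha> * u x powr (-\<alpha>-1)))^2 = \<alpha>^2 * (psi k R x)^2 * (u x powr (-\<alpha>-1))^2"
    by (simp add: power_mult_distrib)
  have N: "(norm (TG u (-\<alpha>) 1 k R x))^2 = u x powr (-2*\<alpha>) * (norm (gpsi k R x))^2
     - 2*\<alpha> * (psi k R x * u x powr (-2*\<alpha>-1) * (grad u x \<bullet> gpsi k R x))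
     + \<alpha>^2 * (psi k R x)^2 * u x powr (-2*\<alpha>-2) * (Gn x)^2"
    unfolding n0 t2 t3 s1 s2 s3 by simp
  show ?thesis unfolding fD_def fX_def fA_def P_def[symmetric] N
    by (simp add: algebra_simps)
qed

lemma id_stab3:
  "g x * fsing' \<delta> \<delta> (u x) * (u x powr (-\<alpha>) * psi k R x ^ 1)^2 = 2*\<delta> * fB R x"
proof -
  have "(u x powr (-\<alpha>))^2 = u x powr (-2*\<alpha>)"
    using upos by (simp add: power2_eq_square powr_add[symmetric])
  moreover have "u x powr (-\<delta>-1) * u x powr (-2*\<alpha>) = u x powr (-(\<delta>+2*\<alpha>+1))"
  proof -
    have "u x powr (-\<delta>-1) * u x powr (-2*\<alpha>) = u x powr ((-\<delta>-1) + (-2*\<alpha>))"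
      using powr_add[of "u x" "-\<delta>-1" "-2*\<alpha>"] by simp
    also have "(-\<delta>-1) + (-2*\<alpha>) = -(\<delta>+2*\<alpha>+1)" by simp
    finally show ?thesis .
  qed
  ultimately show ?thesis unfolding fsing'_def fB_def
    by (simp add: algebra_simps power2_eq_square power_mult_distrib)
qed

lemma mid_le:
  assumes "w x \<ge> 0"
  shows "(if grad u x = 0 then 0 else w x * norm (grad u x) powr (p - 4) * (grad u x \<bullet> v)^2)
     \<le> w x * rpow (Gn x) (p-2) * (norm v)^2"
proof (cases "grad u x = 0")
  case True
  then show ?thesis using assms unfolding rpow_def by auto
next
  case False
  then have G: "Gn x > 0" unfolding Gn_def by auto
  have cs: "(grad u x \<bullet> v)^2 \<le> (Gn x)^2 * (norm v)^2"
  proof -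
    have "\<bar>grad u x \<bullet> v\<bar> \<le> Gn x * norm v" unfolding Gn_def by (rule Cauchy_Schwarz_ineq2)
    then have "\<bar>grad u x \<bullet> v\<bar>^2 \<le> (Gn x * norm v)^2" by (intro power_mono) auto
    then show ?thesis by (simp add: power_mult_distrib)
  qed
  have q: "Gn x powr (p-4) * (Gn x)^2 = Gn x powr (p-2)"
  proof -
    have "(Gn x)^2 = Gn x powr 2" using G by (simp add: powr_realpow)
    then have "Gn x powr (p-4) * (Gn x)^2 = Gn x powr ((p-4) + 2)"
      using powr_add[of "Gn x" "p-4" 2] by simp
    then show ?thesis by simp
  qed
  have r: "rpow (Gn x) (p-2) = Gn x powr (p-4) * (Gn x)^2"
    using G q unfolding rpow_def by auto
  have "w x * Gn x powr (p - 4) * (grad u x \<bullet> v)^2 \<le> w x * Gn x powr (p - 4) * ((Gn x)^2 * (norm v)^2)"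
    using assms cs by (intro mult_left_mono) auto
  then show ?thesis using False unfolding r by (simp add: Gn_def algebra_simps)
qed

lemma P_nonneg: "P x \<ge> 0" unfolding P_def rpow_def by simp
lemma Gn_nonneg: "Gn x \<ge> 0" unfolding Gn_def by simp
lemma psi_nonneg: "psi k R x \<ge> 0" unfolding psi_def using eta_range(1)[of R x] by simp
lemma psi_sq: "(psi k R x)^2 = eta R x ^ (2*k)" unfolding psi_def by (simp add: power_mult[symmetric] mult.commute)

lemma fX_le: assumes "w x \<ge> 0" shows "\<bar>fX R x\<bar> \<le> fY R x"
proof -
  have "\<bar>grad u x \<bullet> gpsi k R x\<bar> \<le> Gn x * norm (gpsi k R x)" unfolding Gn_def by (rule Cauchy_Schwarz_ineq2)
  then have "(w x * P x * u x powr (-2*\<alpha>-1) * psi k R x) * \<bar>grad u x \<bullet> gpsi k R x\<bar>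
     \<le> (w x * P x * u x powr (-2*\<alpha>-1) * psi k R x) * (Gn x * norm (gpsi k R x))"
    using assms P_nonneg[of x] psi_nonneg[of R x] by (intro mult_left_mono mult_nonneg_nonneg) auto
  then show ?thesis unfolding fX_def fY_def using assms P_nonneg[of x] psi_nonneg[of R x]
    by (simp add: abs_mult algebra_simps abs_of_nonneg)
qed

lemma fY_le: assumes "w x \<ge> 0" "\<epsilon> > 0" shows "fY R x \<le> \<epsilon> * fA R x + fD R x / (4*\<epsilon>)"
proof -
  define s1 where "s1 = Gn x * u x powr (-\<alpha>-1) * psi k R x"
  define t1 where "t1 = u x powr (-\<alpha>) * norm (gpsi k R x)"
  have s3: "u x powr (-\<alpha>) * u x powr (-\<alpha>-1) = u x powr (-2*\<alpha>-1)"
    using upos by (simp add: powr_add[symmetric])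
  have q1: "(u x powr (-\<alpha>))^2 = u x powr (-2*\<alpha>)"
    using upos by (simp add: power2_eq_square powr_add[symmetric])
  have q2: "(u x powr (-\<alpha>-1))^2 = u x powr (-2*\<alpha>-2)"
    using upos by (simp add: power2_eq_square powr_add[symmetric])
  have Y: "fY R x = (w x * P x) * (s1 * t1)"
    unfolding fY_def s1_def t1_def s3[symmetric] by (simp add: algebra_simps)
  have A: "fA R x = (w x * P x) * s1^2"
    unfolding fA_def s1_def by (simp add: power_mult_distrib q2 algebra_simps)
  have D: "fD R x = (w x * P x) * t1^2"
    unfolding fD_def t1_def by (simp add: power_mult_distrib q1 algebra_simps)
  have "(w x * P x) * (s1 * t1) \<le> (w x * P x) * (\<epsilon> * s1^2 + t1^2 / (4*\<epsilon>))"
    using amgm_eps[OF assms(2)] assms P_nonneg by (intro mult_left_mono) auto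
  then show ?thesis unfolding Y A D by (simp add: algebra_simps)
qed

definition "C2 \<epsilon> = (if p = 2 then 1 else youngC ((p-2)/p) \<epsilon>)"

lemma C2_nonneg: "C2 \<epsilon> \<ge> 0"
  unfolding C2_def using youngC_nonneg[of "(p-2)/p" \<epsilon>] p2 by auto

lemma fA_nonneg: "w x \<ge> 0 \<Longrightarrow> fA R x \<ge> 0"
  unfolding fA_def using P_nonneg by simp

lemma fT_nonneg: "w x \<ge> 0 \<Longrightarrow> fT R x \<ge> 0"
  unfolding fT_def by simp

lemma fD_le: assumes w: "w x \<ge> 0" and R: "R > 0" and eps: "\<epsilon> > 0" and kp: "2*real k > p"
  shows "fD R x \<le> (real k)^2 * (\<epsilon> * fA R x + C2 \<epsilon> * fT R x)"
proof -
  have gb: "(norm (gpsi k R x))^2 \<le> (real k)^2 * (eta R x ^ (2*k-2) / R^2)"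
  proof -
    have "(norm (gpsi k R x))^2 \<le> (real k * eta R x ^ (k-1) / R)^2"
      using gpsi_bound[OF kk R, of x] by (intro power_mono) auto
    also have "\<dots> = (real k)^2 * (eta R x ^ (2*k-2) / R^2)"
    proof -
      have "2*k-2 = (k-1)*2" using kk by simp
      then have "(eta R x ^ (k-1))^2 = eta R x ^ (2*k-2)"
        by (simp only: power_mult)
      then show ?thesis by (simp add: power_mult_distrib power_divide)
    qed
    finally show ?thesis .
  qed
  have "fD R x \<le> w x * P x * u x powr (-2*\<alpha>) * ((real k)^2 * (eta R x ^ (2*k-2) / R^2))"
    unfolding fD_def using gb w P_nonneg by (intro mult_left_mono) auto
  also have "\<dots> = (real k)^2 * w x * (P x * u x powr (-2*\<alpha>) * (eta R x ^ (2*k-2) / R^2))"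
    by (simp add: algebra_simps)
  also have "\<dots> \<le> (real k)^2 * w x * (\<epsilon> * (P x * (Gn x)^2 * u x powr (-2*\<alpha>-2) * eta R x^(2*k))
                    + C2 \<epsilon> * (u x powr (-(2*\<alpha>+2-p)) * eta R x powr (2*real k - p) * R powr (-p)))"
  proof (rule mult_left_mono[OF _ mult_nonneg_nonneg[OF _ w]])
    show "P x * u x powr (-2*\<alpha>) * (eta R x ^ (2*k-2) / R^2)
       \<le> \<epsilon> * (P x * (Gn x)^2 * u x powr (-2*\<alpha>-2) * eta R x^(2*k))
          + C2 \<epsilon> * (u x powr (-(2*\<alpha>+2-p)) * eta R x powr (2*real k - p) * R powr (-p))"
    proof (cases "p = 2")
      case False
      then have pp: "p > 2" using p2 by auto
      have "P x = Gn x powr (p-2)" unfolding P_def rpow_def using False by simp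
      then show ?thesis unfolding C2_def using False
        young_D[OF pp Gn_nonneg[of x] upos[rule_format, of x] eta_range(1)[of R x] R kp kk eps, of \<alpha>]
        by simp
    next
      case True
      have P1: "P x = 1" unfolding P_def rpow_def using True by simp
      have E: "eta R x ^ (2*k-2) / R^2 = eta R x powr (2*real k - p) * R powr (-p)"
      proof (cases "eta R x = 0")
        case True
        then show ?thesis using kk kp by (simp add: power_0_left)
      next
        case False
        then have ep: "eta R x > 0" using eta_range[of R x] by auto
        have "eta R x ^ (2*k-2) = eta R x powr (real (2*k-2))" using ep by (simp add: powr_realpow)
        moreover have "real (2*k-2) = 2*real k - p" using kk True by simp
        moreover have "R powr (-p) = 1 / R^2" using R True by (simp add: powr_minus powr_realpow divide_inverse)
        ultimately show ?thesis by (simp add: divide_inverse)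
      qed
      have "0 \<le> \<epsilon> * (P x * (Gn x)^2 * u x powr (-2*\<alpha>-2) * eta R x^(2*k))"
        using eps P1 eta_range[of R x] by simp
      moreover have "u x powr (-2*\<alpha>) = u x powr (-(2*\<alpha>+2-p))" using True by simp
      ultimately show ?thesis unfolding C2_def P1 E using True by simp
    qed
  qed simp
  also have "\<dots> = (real k)^2 * (\<epsilon> * fA R x + C2 \<epsilon> * fT R x)"
    unfolding fA_def fT_def psi_sq by (simp add: algebra_simps)
  finally show ?thesis .
qed

definition "aa = 2*\<alpha>+2-p"
definition "bb = \<delta>+2*\<alpha>+1"
definition "SS = bb/(bb-aa)"

lemma fT_le:
  assumes w: "w x > 0" and gx: "g x > 0" "1 / g x \<le> M" and R: "R > 0"
    and a: "aa > 0" "bb > aa" and kp: "2*real k > p"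
    and m: "SS * (2*real k - p - 2*real k*aa/bb) \<ge> 0" and eps: "\<epsilon> > 0"
  shows "fT R x \<le> \<epsilon> * M * fB R x + youngC (aa/bb) \<epsilon> * (indicator (ball 0 (2*R)) x * w x powr SS) * R powr (-p*SS)"
proof (cases "x \<in> ball 0 (2*R)")
  case True
  have y: "fT R x \<le> \<epsilon> * (u x powr (-bb) * eta R x^(2*k)) + youngC (aa/bb) \<epsilon> * (w x powr SS * R powr (-p*SS))"
    unfolding fT_def aa_def[symmetric] SS_def
    by (rule young_T[OF w upos[rule_format] eta_range R a kp m[unfolded SS_def] eps])
  have "u x powr (-bb) * eta R x^(2*k) \<le> M * fB R x"
  proof -
    have "1 \<le> M * g x" using gx by (simp add: divide_le_eq mult.commute)
    then have "1 * (u x powr (-bb) * eta R x^(2*k)) \<le> (M * g x) * (u x powr (-bb) * eta R x^(2*k))"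
      using eta_range(1)[of R x] by (intro mult_right_mono) auto
    then show ?thesis unfolding fB_def psi_sq bb_def by (simp add: algebra_simps)
  qed
  then have "\<epsilon> * (u x powr (-bb) * eta R x^(2*k)) \<le> \<epsilon> * (M * fB R x)" using eps by simp
  then show ?thesis using y True by (simp add: algebra_simps)
next
  case False
  then have "eta R x = 0" using eta_zero[OF R, of x] by (simp add: not_less)
  then have "fT R x = 0" unfolding fT_def using kp by simp
  moreover have "0 \<le> \<epsilon> * M * fB R x"
  proof -
    have "M > 0" using gx by (metis divide_pos_pos less_le_trans zero_less_one)
    then show ?thesis unfolding fB_def using eps gx by simp
  qed
  moreover have "0 \<le> youngC (aa/bb) \<epsilon> * (indicator (ball 0 (2*R)) x * w x powr SS) * R powr (-p*SS)"
    using a by (intro mult_nonneg_nonneg youngC_nonneg) auto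
  ultimately show ?thesis by linarith
qed

end


lemma chain:
  fixes IA IB IX IY ID IT J c k0 e1 K1 e2 C2 kk2 \<delta> \<alpha> p M e3 K2 K3 K4 :: real
  assumes cdef: "c = \<delta>*(2*\<alpha>+1) - (p-1)*\<alpha>^2" and c: "c > 0"
    and k0: "k0 = \<bar>2*\<delta> - 2*(p-1)*\<alpha>\<bar>" and p: "p \<ge> 2" and al: "\<alpha> > 0"
    and E: "2*IX - (2*\<alpha>+1)*IA = -2*IB"
    and S: "(p-1)*(ID - 2*\<alpha>*IX + \<alpha>^2*IA) \<ge> 2*\<delta>*IB"
    and X1: "IX \<le> IY" and X2: "-IX \<le> IY"
    and e1: "e1 = c/(2*(k0+1))" and Y: "IY \<le> e1*IA + ID/(4*e1)"
    and K1: "K1 = k0/(4*e1) + (p-1)"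
    and kk2: "kk2 > 0" and e2: "e2 = c/(4*kk2*K1)" and C2: "C2 \<ge> 0"
    and D: "ID \<le> kk2*(e2*IA + C2*IT)"
    and K2: "K2 = 4*K1*kk2*C2/c"
    and K3: "K3 = (2*\<alpha>+1)/2 + e1 + kk2*e2/(4*e1)"
    and K4: "K4 = K3*K2 + kk2*C2/(4*e1)"
    and M: "M > 0" and e3: "e3 = 1/(2*(K4+1)*M)"
    and T: "IT \<le> e3*M*IB + J"
    and IA: "IA \<ge> 0" and IB: "IB \<ge> 0"
  shows "IB \<le> 2*K4*J"
proof -
  have k0n: "k0 \<ge> 0" using k0 by simp
  have e1p: "e1 > 0" using e1 c k0n by simp
  have K1p: "K1 > 0" using K1 e1p k0n p by (simp add: add_nonneg_pos)
  have e2p: "e2 > 0" using e2 c kk2 K1p by simp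
  have h: "2*IB = (2*\<alpha>+1)*IA - 2*IX" using E by linarith
  have "2*\<delta>*IB = \<delta>*(2*IB)" by simp
  then have "2*\<delta>*IB = \<delta>*((2*\<alpha>+1)*IA - 2*IX)" unfolding h .
  then have s1: "c*IA \<le> (2*\<delta> - 2*(p-1)*\<alpha>)*IX + (p-1)*ID"
    using S unfolding cdef by (simp add: algebra_simps power2_eq_square)
  have s2: "(2*\<delta> - 2*(p-1)*\<alpha>)*IX \<le> k0*IY"
  proof -
    define d where "d = 2*\<delta> - 2*(p-1)*\<alpha>"
    have "d*IX \<le> \<bar>d\<bar>*IY"
    proof (cases "d \<ge> 0")
      case True
      then show ?thesis using X1 by (simp add: mult_left_mono)
    next
      case False
      then have "(-d)*(-IX) \<le> (-d)*IY" using X2 by (intro mult_left_mono) auto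
      then show ?thesis using False by simp
    qed
    then show ?thesis unfolding d_def k0 .
  qed
  have s3: "k0*IY \<le> k0*(e1*IA + ID/(4*e1))" using Y k0n by (intro mult_left_mono)
  have s4: "k0*e1 \<le> c/2" using c k0n unfolding e1 by (simp add: field_simps)
  have s5: "k0*e1*IA \<le> (c/2)*IA" using s4 IA by (intro mult_right_mono)
  have A1: "(c/2)*IA \<le> K1*ID"
  proof -
    have "c*IA \<le> k0*e1*IA + (k0/(4*e1) + (p-1))*ID"
      using s1 s2 s3 by (simp add: algebra_simps)
    moreover have q: "c / 2 * IA = (c*IA)/2" by simp
    ultimately show ?thesis using s5 unfolding K1 q by linarith
  qed
  have "K1*ID \<le> K1*(kk2*(e2*IA + C2*IT))" using D K1p by (intro mult_left_mono) auto
  also have "\<dots> = (c/4)*IA + K1*kk2*C2*IT" unfolding e2 using K1p kk2 by (simp add: field_simps)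
  finally have "(c/4)*IA \<le> K1*kk2*C2*IT" using A1 by linarith
  then have A2: "IA \<le> K2*IT" unfolding K2 using c by (simp add: field_simps)
  have q2: "(2*\<alpha>+1)/2*IA = ((2*\<alpha>+1)*IA)/2" by simp
  have "IB \<le> (2*\<alpha>+1)/2*IA + IY" unfolding q2 using h X2 by linarith
  also have "\<dots> \<le> (2*\<alpha>+1)/2*IA + e1*IA + ID/(4*e1)" using Y by simp
  also have "\<dots> \<le> (2*\<alpha>+1)/2*IA + e1*IA + kk2*(e2*IA + C2*IT)/(4*e1)"
    using D e1p by (simp add: divide_right_mono)
  also have "\<dots> = K3*IA + kk2*C2/(4*e1)*IT" unfolding K3 using e1p by (simp add: field_simps)
  also have "\<dots> \<le> K3*(K2*IT) + kk2*C2/(4*e1)*IT"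
  proof -
    have "K3 \<ge> 0" unfolding K3 using al e1p kk2 e2p by (intro add_nonneg_nonneg) auto
    then show ?thesis using A2 by (simp add: mult_left_mono)
  qed
  also have "\<dots> = K4*IT" unfolding K4 by (simp add: algebra_simps)
  finally have B1: "IB \<le> K4*IT" .
  have K4n: "K4 \<ge> 0"
  proof -
    have "K3 \<ge> 0" unfolding K3 using al e1p kk2 e2p by (intro add_nonneg_nonneg) auto
    moreover have "K2 \<ge> 0" unfolding K2 using K1p kk2 C2 c by simp
    ultimately show ?thesis unfolding K4 using C2 kk2 e1p by simp
  qed
  have "K4*IT \<le> K4*(e3*M*IB + J)" using T K4n by (intro mult_left_mono)
  also have "\<dots> = K4*(e3*M)*IB + K4*J" by (simp add: algebra_simps)
  also have "\<dots> = (K4/(2*(K4+1)))*IB + K4*J"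
  proof -
    have em: "e3*M = 1/(2*(K4+1))" unfolding e3 using M K4n by simp
    show ?thesis unfolding em by simp
  qed
  also have "\<dots> \<le> (1/2)*IB + K4*J"
  proof -
    have "K4/(2*(K4+1)) \<le> 1/2" using K4n by (simp add: field_simps)
    then have "(K4/(2*(K4+1)))*IB \<le> (1/2)*IB" using IB by (rule mult_right_mono)
    then show ?thesis by linarith
  qed
  finally show ?thesis using B1 by linarith
qed


locale setting2 = setting +
  fixes M :: real
  assumes weak: "weak_solution p \<delta> \<delta> w g u" and stab: "stable_solution p \<delta> \<delta> w g u"
    and wpos: "AE x in lebesgue. 0 < w x" and gpos: "AE x in lebesgue. 0 < g x"
    and gM: "AE x in lebesgue. 1 / g x \<le> M" and Mpos: "M > 0"
    and dpos: "\<delta> > 0" and alpos: "\<alpha> > 0" and cpos: "\<delta>*(2*\<alpha>+1) - (p-1)*\<alpha>^2 > 0"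
    and apos: "aa > 0" and ab: "bb > aa" and kp: "2*real k > p"
    and mpos: "SS * (2*real k - p - 2*real k*aa/bb) \<ge> 0"
begin

lemma wge: "AE x in lebesgue. 0 \<le> w x" using wpos by (auto elim: eventually_mono)

lemma EW: assumes R: "R > 0"
  shows "2 * integral\<^sup>L lebesgue (fX R) - (2*\<alpha>+1) * integral\<^sup>L lebesgue (fA R) = -2 * integral\<^sup>L lebesgue (fB R)"
proof -
  have C: "C1c_fun (\<lambda>x. u x powr (-(2*\<alpha>+1)) * psi k R x ^ 2)"
    and G: "grad (\<lambda>x. u x powr (-(2*\<alpha>+1)) * psi k R x ^ 2) = TG u (-(2*\<alpha>+1)) 2 k R"
    using tf_C1c[OF uC1 upos kk R, of 2 "-(2*\<alpha>+1)"] by auto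
  have W: "(\<integral>x. w x * rpow (norm (grad u x)) (p - 2) * (grad u x \<bullet> TG u (-(2*\<alpha>+1)) 2 k R x) \<partial>lebesgue)
     = (\<integral>x. g x * fsing \<delta> \<delta> (u x) * (u x powr (-(2*\<alpha>+1)) * psi k R x ^ 2) \<partial>lebesgue)"
    using weak C G unfolding weak_solution_def by auto
  have l: "(\<lambda>x. w x * rpow (norm (grad u x)) (p - 2) * (grad u x \<bullet> TG u (-(2*\<alpha>+1)) 2 k R x))
     = (\<lambda>x. 2 * fX R x - (2*\<alpha>+1) * fA R x)"
    using id_weak unfolding Gn_def by auto
  have r: "(\<lambda>x. g x * fsing \<delta> \<delta> (u x) * (u x powr (-(2*\<alpha>+1)) * psi k R x ^ 2)) = (\<lambda>x. -2 * fB R x)"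
    using id_weakR by auto
  have "(\<integral>x. 2 * fX R x - (2*\<alpha>+1) * fA R x \<partial>lebesgue) = 2 * integral\<^sup>L lebesgue (fX R) - (2*\<alpha>+1) * integral\<^sup>L lebesgue (fA R)"
    using int_fX[OF R] int_fA[OF R] by (simp add: integral_diff)
  then show ?thesis using W unfolding l r by simp
qed

lemma ES: assumes R: "R > 0"
  shows "(p-1) * (integral\<^sup>L lebesgue (fD R) - 2*\<alpha> * integral\<^sup>L lebesgue (fX R) + \<alpha>^2 * integral\<^sup>L lebesgue (fA R))
      \<ge> 2*\<delta> * integral\<^sup>L lebesgue (fB R)"
proof -
  have C: "C1c_fun (\<lambda>x. u x powr (-\<alpha>) * psi k R x ^ 1)"
    and G: "grad (\<lambda>x. u x powr (-\<alpha>) * psi k R x ^ 1) = TG u (-\<alpha>) 1 k R"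
    using tf_C1c[OF uC1 upos kk R, of 1 "-\<alpha>"] by auto
  define S1 where "S1 = (\<lambda>x. fD R x - 2*\<alpha> * fX R x + \<alpha>^2 * fA R x)"
  define Mid where "Mid = (\<lambda>x. if grad u x = 0 then 0
              else w x * norm (grad u x) powr (p - 4) * (grad u x \<bullet> TG u (-\<alpha>) 1 k R x)\<^sup>2)"
  have St: "(\<integral>x. w x * rpow (norm (grad u x)) (p - 2) * (norm (TG u (-\<alpha>) 1 k R x))\<^sup>2 \<partial>lebesgue)
        + (p - 2) * integral\<^sup>L lebesgue Mid
        - (\<integral>x. g x * fsing' \<delta> \<delta> (u x) * (u x powr (-\<alpha>) * psi k R x ^ 1)\<^sup>2 \<partial>lebesgue) \<ge> 0"
    using stab[unfolded stable_solution_def, rule_format, OF C] unfolding G Mid_def .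
  have l: "(\<lambda>x. w x * rpow (norm (grad u x)) (p - 2) * (norm (TG u (-\<alpha>) 1 k R x))\<^sup>2) = S1"
    using id_stab1 unfolding Gn_def S1_def by auto
  have r: "(\<lambda>x. g x * fsing' \<delta> \<delta> (u x) * (u x powr (-\<alpha>) * psi k R x ^ 1)\<^sup>2) = (\<lambda>x. 2*\<delta> * fB R x)"
    using id_stab3 by auto
  have iS1: "integrable lebesgue S1" unfolding S1_def
    using int_fX[OF R] int_fA[OF R] int_fD[OF R] by auto
  have IS1: "integral\<^sup>L lebesgue S1 = integral\<^sup>L lebesgue (fD R) - 2*\<alpha> * integral\<^sup>L lebesgue (fX R) + \<alpha>^2 * integral\<^sup>L lebesgue (fA R)"
    unfolding S1_def using int_fX[OF R] int_fA[OF R] int_fD[OF R] by (simp add: integral_diff)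
  have mid: "integral\<^sup>L lebesgue Mid \<le> integral\<^sup>L lebesgue S1"
  proof (rule integral_mono_AE'[OF iS1])
    show "AE x in lebesgue. Mid x \<le> S1 x"
      proof (rule eventually_mono[OF wge])
      fix x assume "0 \<le> w x"
      then show "Mid x \<le> S1 x" unfolding Mid_def S1_def using mid_le[of x "TG u (-\<alpha>) 1 k R x"] id_stab1[of x R]
        unfolding Gn_def by auto
    qed
    show "AE x in lebesgue. 0 \<le> S1 x"
      proof (rule eventually_mono[OF wge])
      fix x assume "0 \<le> w x"
      then show "0 \<le> S1 x" unfolding S1_def using id_stab1[of x R]
        by (metis P_def P_nonneg mult_nonneg_nonneg zero_le_power2)
    qed
  qed
  have "(p-2) * integral\<^sup>L lebesgue Mid \<le> (p-2) * integral\<^sup>L lebesgue S1"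
    using mid p2 by (intro mult_left_mono) auto
  then have "integral\<^sup>L lebesgue S1 + (p-2) * integral\<^sup>L lebesgue S1 - 2*\<delta> * integral\<^sup>L lebesgue (fB R) \<ge> 0"
    using St unfolding l r by simp
  then show ?thesis unfolding IS1[symmetric] by (simp add: algebra_simps)
qed

lemma fX_up: "0 \<le> w x \<Longrightarrow> fX R x \<le> fY R x" using fX_le[of x R] by linarith
lemma fX_lo: "0 \<le> w x \<Longrightarrow> - fX R x \<le> fY R x" using fX_le[of x R] by linarith

lemma main_est:
  "\<exists>K. \<forall>R\<ge>1. integrable lebesgue (\<lambda>x. indicator (ball 0 (2*R)) x * w x powr SS) \<longrightarrow>
      integral\<^sup>L lebesgue (fB R) \<le> K * (R powr (-p*SS) * (\<integral>x. indicator (ball 0 (2*R)) x * w x powr SS \<partial>lebesgue))"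
proof -
  define c where "c = \<delta>*(2*\<alpha>+1) - (p-1)*\<alpha>^2"
  define k0 where "k0 = \<bar>2*\<delta> - 2*(p-1)*\<alpha>\<bar>"
  define e1 where "e1 = c/(2*(k0+1))"
  define K1 where "K1 = k0/(4*e1) + (p-1)"
  define kk2 where "kk2 = (real k)^2"
  define e2 where "e2 = c/(4*kk2*K1)"
  define C2' where "C2' = C2 e2"
  define K2 where "K2 = 4*K1*kk2*C2'/c"
  define K3 where "K3 = (2*\<alpha>+1)/2 + e1 + kk2*e2/(4*e1)"
  define K4 where "K4 = K3*K2 + kk2*C2'/(4*e1)"
  define e3 where "e3 = 1/(2*(K4+1)*M)"
  define C3 where "C3 = youngC (aa/bb) e3"
  have c: "c > 0" using cpos unfolding c_def .
  have k0n: "k0 \<ge> 0" unfolding k0_def by simp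
  have e1p: "e1 > 0" unfolding e1_def using c k0n by simp
  have K1p: "K1 > 0" unfolding K1_def using e1p k0n p2 by (simp add: add_nonneg_pos)
  have kk2p: "kk2 > 0" unfolding kk2_def using kk by simp
  have e2p: "e2 > 0" unfolding e2_def using c kk2p K1p by simp
  have K4n: "K4 \<ge> 0"
  proof -
    have "K3 \<ge> 0" unfolding K3_def using alpos e1p kk2p e2p by (intro add_nonneg_nonneg) auto
    moreover have "K2 \<ge> 0" unfolding K2_def C2'_def using K1p kk2p C2_nonneg c by simp
    ultimately show ?thesis unfolding K4_def C2'_def using C2_nonneg kk2p e1p by simp
  qed
  have e3p: "e3 > 0" unfolding e3_def using K4n Mpos by simp
  show ?thesis
  proof (intro exI allI impI)
    fix R :: real assume R1: "1 \<le> R" and iW: "integrable lebesgue (\<lambda>x. indicator (ball 0 (2*R)) x * w x powr SS)"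
    have R: "R > 0" using R1 by simp
    define IA where "IA = integral\<^sup>L lebesgue (fA R)"
    define IB where "IB = integral\<^sup>L lebesgue (fB R)"
    define IX where "IX = integral\<^sup>L lebesgue (fX R)"
    define IY where "IY = integral\<^sup>L lebesgue (fY R)"
    define ID where "ID = integral\<^sup>L lebesgue (fD R)"
    define IT where "IT = integral\<^sup>L lebesgue (fT R)"
    define IW where "IW = (\<integral>x. indicator (ball 0 (2*R)) x * w x powr SS \<partial>lebesgue)"
    define J where "J = C3 * (R powr (-p*SS) * IW)"
    note ints = int_fA[OF R] int_fB[OF R] int_fX[OF R] int_fY[OF R] int_fD[OF R] int_fT[OF R kp]
    have E: "2*IX - (2*\<alpha>+1)*IA = -2*IB" using EW[OF R] unfolding IA_def IB_def IX_def .
    have S: "(p-1)*(ID - 2*\<alpha>*IX + \<alpha>^2*IA) \<ge> 2*\<delta>*IB" using ES[OF R] unfolding IA_def IB_def IX_def ID_def .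
    have X1: "IX \<le> IY" unfolding IX_def IY_def
      by (rule integral_mono_AE[OF ints(3) ints(4)], rule eventually_mono[OF wge], erule fX_up)
    have X2: "-IX \<le> IY" unfolding IX_def IY_def integral_minus[symmetric]
    proof (rule integral_mono_AE)
      show "AE x in lebesgue. - fX R x \<le> fY R x" by (rule eventually_mono[OF wge], erule fX_lo)
    qed (use ints in auto)
    have Y: "IY \<le> e1*IA + ID/(4*e1)"
    proof -
      have "IY \<le> (\<integral>x. e1 * fA R x + fD R x / (4*e1) \<partial>lebesgue)" unfolding IY_def
      proof (rule integral_mono_AE)
        show "AE x in lebesgue. fY R x \<le> e1 * fA R x + fD R x / (4*e1)"
          by (rule eventually_mono[OF wge], erule fY_le[OF _ e1p])
      qed (use ints in auto)
      also have "\<dots> = e1*IA + ID/(4*e1)" unfolding IA_def ID_def using ints by simp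
      finally show ?thesis .
    qed
    have D: "ID \<le> kk2*(e2*IA + C2'*IT)"
    proof -
      have "ID \<le> (\<integral>x. kk2 * (e2 * fA R x + C2' * fT R x) \<partial>lebesgue)" unfolding ID_def
      proof (rule integral_mono_AE)
        show "AE x in lebesgue. fD R x \<le> kk2 * (e2 * fA R x + C2' * fT R x)"
          unfolding kk2_def C2'_def by (rule eventually_mono[OF wge], erule fD_le[OF _ R e2p kp])
      qed (use ints in auto)
      also have "\<dots> = kk2*(e2*IA + C2'*IT)" unfolding IA_def IT_def using ints by simp
      finally show ?thesis .
    qed
    have T: "IT \<le> e3*M*IB + J"
    proof -
      have ae: "AE x in lebesgue. 0 < w x \<and> 0 < g x \<and> 1 / g x \<le> M"
        using wpos gpos gM by eventually_elim auto
      have "IT \<le> (\<integral>x. e3 * M * fB R x + C3 * (indicator (ball 0 (2*R)) x * w x powr SS) * R powr (-p*SS) \<partial>lebesgue)"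
        unfolding IT_def
      proof (rule integral_mono_AE)
        show "AE x in lebesgue. fT R x \<le> e3 * M * fB R x + C3 * (indicator (ball 0 (2*R)) x * w x powr SS) * R powr (-p*SS)"
          unfolding C3_def by (rule eventually_mono[OF ae]) (use fT_le[OF _ _ _ R apos ab kp mpos e3p] in auto)
      qed (use ints iW in auto)
      also have "\<dots> = (\<integral>x. e3 * M * fB R x \<partial>lebesgue) + (\<integral>x. C3 * (indicator (ball 0 (2*R)) x * w x powr SS) * R powr (-p*SS) \<partial>lebesgue)"
        by (rule Bochner_Integration.integral_add) (use ints iW in auto)
      also have "\<dots> = e3*M*IB + J"
      proof -
        have "(\<integral>x. C3 * (indicator (ball 0 (2*R)) x * w x powr SS) * R powr (-p*SS) \<partial>lebesgue) = C3 * IW * R powr (-p*SS)"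
          unfolding IW_def by simp
        then show ?thesis unfolding IB_def J_def by (simp add: algebra_simps)
      qed
      finally show ?thesis .
    qed
    have IAn: "IA \<ge> 0" unfolding IA_def
      by (rule integral_nonneg_AE, rule eventually_mono[OF wge], erule fA_nonneg)
    have IBn: "IB \<ge> 0" unfolding IB_def
    proof (rule integral_nonneg_AE)
      show "AE x in lebesgue. 0 \<le> fB R x"
        by (rule eventually_mono[OF gpos]) (simp add: fB_def)
    qed
    have "IB \<le> 2*K4*J"
      by (rule chain[OF c_def c k0_def p2 alpos E S X1 X2 e1_def Y K1_def kk2p e2_def _ D K2_def K3_def K4_def Mpos e3_def T IAn IBn])
        (simp add: C2'_def C2_nonneg)
    then show "integral\<^sup>L lebesgue (fB R) \<le> (2*K4*C3) * (R powr (-p*SS) * (\<integral>x. indicator (ball 0 (2*R)) x * w x powr SS \<partial>lebesgue))"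
      unfolding IB_def J_def IW_def by (simp add: algebra_simps)
  qed
qed

lemma IB_mono: assumes R: "R \<ge> 1" shows "integral\<^sup>L lebesgue (fB 1) \<le> integral\<^sup>L lebesgue (fB R)"
proof (rule integral_mono_AE[OF int_fB int_fB])
  show "AE x in lebesgue. fB 1 x \<le> fB R x"
  proof (rule eventually_mono[OF gpos])
    fix x assume g: "0 < g x"
    have "eta 1 x \<le> eta R x" using R by (intro eta_mono) auto
    then have "psi k 1 x \<le> psi k R x" unfolding psi_def using eta_range(1)[of 1 x] by (intro power_mono) auto
    then have "(psi k 1 x)^2 \<le> (psi k R x)^2" using psi_nonneg[of 1 x] by (intro power_mono) auto
    then show "fB 1 x \<le> fB R x" unfolding fB_def using g by (simp add: mult_left_mono)
  qed
qed (use R in auto)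

lemma IB1_pos: "integral\<^sup>L lebesgue (fB 1) > 0"
proof -
  have nn: "AE x in lebesgue. 0 \<le> fB 1 x" by (rule eventually_mono[OF gpos]) (simp add: fB_def)
  have ge: "integral\<^sup>L lebesgue (fB 1) \<ge> 0" by (rule integral_nonneg_AE[OF nn])
  show ?thesis
  proof (rule ccontr)
    assume "\<not> ?thesis"
    then have "integral\<^sup>L lebesgue (fB 1) = 0" using ge by auto
    then have z: "AE x in lebesgue. fB 1 x = 0" using integral_nonneg_eq_0_iff_AE[OF int_fB nn] by auto
    have "AE x in lebesgue. x \<notin> ball (0::'a) 1"
      using z gpos
    proof eventually_elim
      case (elim x)
      show "x \<notin> ball (0::'a) 1"
      proof
        assume "x \<in> ball (0::'a) 1"
        then have "eta 1 x \<ge> 3/4" by (intro eta_ball1) auto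
        then have "psi k 1 x > 0" unfolding psi_def by simp
        moreover have "u x powr (-(\<delta>+2*\<alpha>+1)) > 0" using upos[rule_format, of x] by simp
        ultimately have "fB 1 x > 0" unfolding fB_def using elim(2) by (intro mult_pos_pos) auto
        then show False using elim(1) by simp
      qed
    qed
    then have "emeasure lebesgue (ball (0::'a) 1) = 0"
      by (subst (asm) AE_iff_measurable[where N="ball 0 1"]) auto
    moreover have "Henstock_Kurzweil_Integration.content (ball (0::'a) 1) > 0" by (rule content_ball_pos) simp
    ultimately show False
      using emeasure_lborel_ball_finite[of "0::'a" 1] by (simp add: measure_def)
  qed
qed

end


lemma interp_pw:
  fixes v \<tau> S S0 :: real
  assumes v: "v \<ge> 0" and t: "\<tau> > 0" and S: "0 < S" "S \<le> S0"
  shows "v powr S \<le> \<tau> powr (S - S0) * v powr S0 + \<tau> powr S"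
proof (cases "v \<ge> \<tau>")
  case True
  then have vp: "v > 0" using t by auto
  have "v powr (S - S0) \<le> \<tau> powr (S - S0)" using True t S by (intro powr_mono2') auto
  then have "v powr (S - S0) * v powr S0 \<le> \<tau> powr (S - S0) * v powr S0" by (intro mult_right_mono) auto
  moreover have "v powr S = v powr (S - S0) * v powr S0" using vp by (simp add: powr_add[symmetric])
  ultimately show ?thesis by (smt (verit) powr_ge_zero)
next
  case False
  then have "v powr S \<le> \<tau> powr S" using v S by (intro powr_mono2) auto
  moreover have "0 \<le> \<tau> powr (S - S0) * v powr S0" by simp
  ultimately show ?thesis by linarith
qed

lemma decay:
  fixes w :: "'a::euclidean_space \<Rightarrow> real" and S0 SS p lam C :: real
  assumes wm: "w \<in> borel_measurable lebesgue" and w0: "AE x in lebesgue. 0 \<le> w x"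
    and growth: "\<forall>R\<ge>1. (\<integral>\<^sup>+ x \<in> ball 0 (2 * R). ennreal (w x powr S0) \<partial>lebesgue) \<le> ennreal (C * R powr lam)"
    and Cpos: "C > 0"
    and S: "1 \<le> SS" "SS \<le> S0" and p: "p \<ge> 0"
    and cond: "(real DIM('a) + 1 + p)*(S0-SS) < p*S0 - lam"
  shows "\<forall>R\<ge>1. integrable lebesgue (\<lambda>x. indicator (ball 0 (2*R)) x * w x powr SS)"
    and "\<forall>K B. B > 0 \<longrightarrow> (\<exists>R\<ge>1. K * (R powr (-p*SS) * (\<integral>x. indicator (ball 0 (2*R)) x * w x powr SS \<partial>lebesgue)) < B)"
proof -
  note wm[measurable]
  have ballm[measurable]: "ball (0::'a) r \<in> sets lebesgue" for r by simp
  define N where "N = real DIM('a)"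
  define V where "V = measure lebesgue (ball (0::'a) 1)"
  have fin: "emeasure lebesgue (ball (c::'a) r) < \<infinity>" for c r
    using emeasure_lborel_ball_finite[of c r] by simp
  have iind: "integrable lebesgue (indicator (ball (0::'a) r) :: 'a \<Rightarrow> real)" for r
    using fin by (intro integrable_real_indicator) auto
  have vol: "(\<integral>x. indicator (ball (0::'a) r) x \<partial>lebesgue) = r^DIM('a) * V" if "r \<ge> 0" for r :: real
  proof -
    have "(\<integral>x. indicator (ball (0::'a) r) x \<partial>lebesgue) = measure lebesgue (ball (0::'a) r)" by simp
    also have "\<dots> = Henstock_Kurzweil_Integration.content (ball (0::'a) r)" by simp
    also have "\<dots> = r^DIM('a) * Henstock_Kurzweil_Integration.content (ball (0::'a) 1)" using that by (rule content_ball_conv_unit_ball)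
    finally show ?thesis unfolding V_def by simp
  qed
  have Vn: "V \<ge> 0" unfolding V_def by simp
  have I0: "integrable lebesgue (\<lambda>x. indicator (ball 0 (2*R)) x * w x powr S0) \<and>
      (\<integral>x. indicator (ball 0 (2*R)) x * w x powr S0 \<partial>lebesgue) \<le> C * R powr lam" if R: "R \<ge> 1" for R
  proof -
    let ?f = "\<lambda>x. indicator (ball (0::'a) (2*R)) x * w x powr S0"
    have fm: "?f \<in> borel_measurable lebesgue" by measurable
    have fn: "AE x in lebesgue. 0 \<le> ?f x" by simp
    have eq: "(\<integral>\<^sup>+x. ennreal (?f x) \<partial>lebesgue) = (\<integral>\<^sup>+ x \<in> ball 0 (2 * R). ennreal (w x powr S0) \<partial>lebesgue)"
      by (intro nn_integral_cong) (simp add: indicator_def)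
    have le: "(\<integral>\<^sup>+x. ennreal (?f x) \<partial>lebesgue) \<le> ennreal (C * R powr lam)"
      unfolding eq using growth R by auto
    then have lt: "(\<integral>\<^sup>+x. ennreal (?f x) \<partial>lebesgue) < \<infinity>"
      using le_less_trans[OF le ennreal_less_top] by simp
    have "integrable lebesgue ?f" by (rule integrableI_nonneg[OF fm fn]) (use lt in simp)
    moreover have "integral\<^sup>L lebesgue ?f \<le> C * R powr lam"
    proof -
      have "integral\<^sup>L lebesgue ?f = enn2real (\<integral>\<^sup>+x. ennreal (?f x) \<partial>lebesgue)"
        by (rule integral_eq_nn_integral[OF fm fn])
      also have "\<dots> \<le> enn2real (ennreal (C * R powr lam))"
        by (rule enn2real_mono[OF le]) simp
      also have "\<dots> = C * R powr lam" using Cpos by simp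
      finally show ?thesis .
    qed
    ultimately show ?thesis by simp
  qed
  have IW: "integrable lebesgue (\<lambda>x. indicator (ball 0 (2*R)) x * w x powr SS) \<and>
      (\<integral>x. indicator (ball 0 (2*R)) x * w x powr SS \<partial>lebesgue)
        \<le> \<tau> powr (SS - S0) * (C * R powr lam) + \<tau> powr SS * ((2*R)^DIM('a) * V)"
    if R: "R \<ge> 1" and t: "\<tau> > 0" for R \<tau>
  proof -
    let ?g = "\<lambda>x. \<tau> powr (SS - S0) * (indicator (ball (0::'a) (2*R)) x * w x powr S0) + \<tau> powr SS * indicator (ball (0::'a) (2*R)) x"
    have ig: "integrable lebesgue ?g" using I0[OF R] iind[of "2*R"] by auto
    have pw: "AE x in lebesgue. indicator (ball 0 (2*R)) x * w x powr SS \<le> ?g x"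
    proof (rule eventually_mono[OF w0])
      fix x assume "0 \<le> w x"
      then show "indicator (ball 0 (2*R)) x * w x powr SS \<le> ?g x"
        using interp_pw[of "w x" \<tau> SS S0] t S by (auto simp: indicator_def)
    qed
    have int: "integrable lebesgue (\<lambda>x. indicator (ball 0 (2*R)) x * w x powr SS)"
    proof (rule Bochner_Integration.integrable_bound[OF ig])
      show "(\<lambda>x. indicator (ball (0::'a) (2*R)) x * w x powr SS) \<in> borel_measurable lebesgue" by measurable
      show "AE x in lebesgue. norm (indicator (ball (0::'a) (2*R)) x * w x powr SS) \<le> norm (?g x)"
        using pw by eventually_elim (auto simp: indicator_def)
    qed
    have "(\<integral>x. indicator (ball 0 (2*R)) x * w x powr SS \<partial>lebesgue) \<le> integral\<^sup>L lebesgue ?g"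
      by (rule integral_mono_AE[OF int ig pw])
    also have "\<dots> = \<tau> powr (SS - S0) * (\<integral>x. indicator (ball (0::'a) (2*R)) x * w x powr S0 \<partial>lebesgue)
        + \<tau> powr SS * (\<integral>x. indicator (ball (0::'a) (2*R)) x \<partial>lebesgue)"
      using I0[OF R] iind[of "2*R"] by simp
    also have "\<dots> \<le> \<tau> powr (SS - S0) * (C * R powr lam) + \<tau> powr SS * ((2*R)^DIM('a) * V)"
      using I0[OF R] vol[of "2*R"] R by (simp add: mult_left_mono)
    finally show ?thesis using int by simp
  qed
  show "\<forall>R\<ge>1. integrable lebesgue (\<lambda>x. indicator (ball 0 (2*R)) x * w x powr SS)"
    using IW[of _ 1] by auto
  define e1 where "e1 = (N+1)*(S0-SS) + lam - p*SS"
  define e2 where "e2 = N - (N+1)*SS - p*SS"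
  have e1n: "e1 < 0" unfolding e1_def using cond unfolding N_def by (simp add: algebra_simps)
  have e2n: "e2 < 0"
  proof -
    have "(N+1)*SS \<ge> N+1" using S unfolding N_def by simp
    moreover have "p*SS \<ge> 0" using p S by simp
    ultimately show ?thesis unfolding e2_def by linarith
  qed
  have bound: "R powr (-p*SS) * (\<integral>x. indicator (ball 0 (2*R)) x * w x powr SS \<partial>lebesgue)
       \<le> C * R powr e1 + (2^DIM('a) * V) * R powr e2" if R: "R \<ge> 1" for R
  proof -
    define \<tau> where "\<tau> = R powr (-(N+1))"
    have t: "\<tau> > 0" unfolding \<tau>_def using R by simp
    have Rp: "R > 0" using R by simp
    have "R powr (-p*SS) * (\<integral>x. indicator (ball 0 (2*R)) x * w x powr SS \<partial>lebesgue)
       \<le> R powr (-p*SS) * (\<tau> powr (SS - S0) * (C * R powr lam) + \<tau> powr SS * ((2*R)^DIM('a) * V))"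
      using IW[OF R t] by (intro mult_left_mono) auto
    also have "\<dots> = C * R powr e1 + (2^DIM('a) * V) * R powr e2"
    proof -
      have a1: "\<tau> powr (SS - S0) = R powr (-(N+1)*(SS-S0))" unfolding \<tau>_def using Rp by (simp add: powr_powr)
      have a2: "\<tau> powr SS = R powr (-(N+1)*SS)" unfolding \<tau>_def using Rp by (simp add: powr_powr)
      have a3: "(2*R)^DIM('a) = 2^DIM('a) * R powr N" unfolding N_def using Rp by (simp add: power_mult_distrib powr_realpow)
      have "R powr (-p*SS) * (\<tau> powr (SS - S0) * (C * R powr lam)) = C * (R powr (-p*SS) * R powr (-(N+1)*(SS-S0)) * R powr lam)"
        unfolding a1 by (simp add: algebra_simps)
      also have "\<dots> = C * R powr e1" unfolding e1_def by (simp add: powr_add[symmetric] algebra_simps)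
      finally have b1: "R powr (-p*SS) * (\<tau> powr (SS - S0) * (C * R powr lam)) = C * R powr e1" .
      have "R powr (-p*SS) * (\<tau> powr SS * ((2*R)^DIM('a) * V)) = (2^DIM('a) * V) * (R powr (-p*SS) * R powr (-(N+1)*SS) * R powr N)"
        unfolding a2 a3 by (simp add: algebra_simps)
      also have "\<dots> = (2^DIM('a) * V) * R powr e2" unfolding e2_def by (simp add: powr_add[symmetric] algebra_simps)
      finally have b2: "R powr (-p*SS) * (\<tau> powr SS * ((2*R)^DIM('a) * V)) = (2^DIM('a) * V) * R powr e2" .
      show ?thesis by (simp only: distrib_left b1 b2)
    qed
    finally show ?thesis .
  qed
  show "\<forall>K B. B > 0 \<longrightarrow> (\<exists>R\<ge>1. K * (R powr (-p*SS) * (\<integral>x. indicator (ball 0 (2*R)) x * w x powr SS \<partial>lebesgue)) < B)"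
  proof (intro allI impI)
    fix K B :: real assume B: "B > 0"
    define K' where "K' = max K 0"
    have l1: "((\<lambda>R. R powr e1) \<longlongrightarrow> 0) at_top" by (rule tendsto_neg_powr[OF e1n filterlim_ident])
    have l2: "((\<lambda>R. R powr e2) \<longlongrightarrow> 0) at_top" by (rule tendsto_neg_powr[OF e2n filterlim_ident])
    have "((\<lambda>R. K' * (C * R powr e1 + (2^DIM('a) * V) * R powr e2)) \<longlongrightarrow> K' * (C * 0 + (2^DIM('a) * V) * 0)) at_top"
      by (rule tendsto_mult[OF tendsto_const tendsto_add[OF tendsto_mult[OF tendsto_const l1] tendsto_mult[OF tendsto_const l2]]])
    then have "eventually (\<lambda>R. K' * (C * R powr e1 + (2^DIM('a) * V) * R powr e2) < B) at_top"
      using B by (intro order_tendstoD(2)) auto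
    then obtain N0 where N0: "\<forall>R\<ge>N0. K' * (C * R powr e1 + (2^DIM('a) * V) * R powr e2) < B"
      unfolding eventually_at_top_linorder by blast
    define R where "R = max N0 1"
    have R: "R \<ge> 1" and lt: "K' * (C * R powr e1 + (2^DIM('a) * V) * R powr e2) < B"
      using N0 unfolding R_def by auto
    define X where "X = R powr (-p*SS) * (\<integral>x. indicator (ball 0 (2*R)) x * w x powr SS \<partial>lebesgue)"
    have Xn: "X \<ge> 0" unfolding X_def by (intro mult_nonneg_nonneg integral_nonneg_AE) auto
    have "K * X \<le> K' * X" unfolding K'_def using Xn by (intro mult_right_mono) auto
    also have "\<dots> \<le> K' * (C * R powr e1 + (2^DIM('a) * V) * R powr e2)"
      unfolding X_def K'_def using bound[OF R] by (intro mult_left_mono) auto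
    finally show "\<exists>R\<ge>1. K * (R powr (-p*SS) * (\<integral>x. indicator (ball 0 (2*R)) x * w x powr SS \<partial>lebesgue)) < B"
      using R lt unfolding X_def by (intro exI[of _ R]) auto
  qed
qed


lemma params_gt2:
  fixes \<delta> p :: real
  assumes p: "p > 2" and Pa: "class_Pa \<delta> p" and d: "\<delta> \<ge> 1"
  defines "\<alpha> \<equiv> 2*\<delta>/(p-1) - 1/2"
  shows "\<alpha> > 0" "\<delta>*(2*\<alpha>+1) - (p-1)*\<alpha>^2 > 0" "2*\<alpha>+2-p > 0"
    "(\<delta>+2*\<alpha>+1)/((\<delta>+2*\<alpha>+1) - (2*\<alpha>+2-p)) = S_pa \<delta> p"
proof -
  have q: "4*\<delta> > (p-1)^2"
    using Pa p unfolding class_Pa_def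
  proof (elim disjE conjE)
    assume "2 \<le> p" "p < 3" "\<delta> \<ge> 1"
    then have "(p-1)^2 < 2^2" by (intro power_strict_mono) auto
    then show ?thesis using \<open>\<delta> \<ge> 1\<close> by simp
  next
    assume "p = 3" "\<delta> > 1" then show ?thesis by simp
  next
    assume "p > 3" "\<delta> > (p - 1)\<^sup>2 / 4" then show ?thesis by simp
  qed
  have p1: "p - 1 > 1" using p by simp
  have "(p-1) \<le> (p-1)^2" using p1 by (simp add: power2_eq_square)
  then have q2: "4*\<delta> > p - 1" using q by linarith
  show "\<alpha> > 0" unfolding \<alpha>_def using q2 p1 by (simp add: field_simps)
  show "2*\<alpha>+2-p > 0" unfolding \<alpha>_def using q p1 by (simp add: field_simps power2_eq_square)
  have "\<delta>*(2*\<alpha>+1) - (p-1)*\<alpha>^2 = 2*\<delta> - (p-1)/4"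
  proof -
    define q where "q = p - 1"
    have qn: "q \<noteq> 0" unfolding q_def using p1 by simp
    have "\<delta>*(2*(2*\<delta>/q - 1/2)+1) - q*(2*\<delta>/q - 1/2)^2 = 2*\<delta> - q/4"
      using qn by (simp add: field_simps power2_eq_square)
    then show ?thesis unfolding \<alpha>_def q_def .
  qed
  then show "\<delta>*(2*\<alpha>+1) - (p-1)*\<alpha>^2 > 0" using q2 d by simp
  show "(\<delta>+2*\<alpha>+1)/((\<delta>+2*\<alpha>+1) - (2*\<alpha>+2-p)) = S_pa \<delta> p"
  proof -
    define q where "q = p - 1"
    have qp: "q > 0" "q \<noteq> 0" "\<delta> + q \<noteq> 0" "q + \<delta> \<noteq> 0" unfolding q_def using p1 d by auto
    have den: "(\<delta>+2*\<alpha>+1) - (2*\<alpha>+2-p) = \<delta> + q" unfolding q_def by simp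
    have num: "\<delta>+2*\<alpha>+1 = \<delta> + 4*\<delta>/q" unfolding \<alpha>_def q_def[symmetric] using qp by (simp add: field_simps)
    have S: "S_pa \<delta> p = 1 + 2*(2*\<delta>/q - q/2)/(q+\<delta>)"
      unfolding S_pa_def s_p_def q_def using p by simp
    have "1 + 2*(2*\<delta>/q - q/2)/(q+\<delta>) = (\<delta> + 4*\<delta>/q)/(\<delta>+q)"
    proof -
      have a: "2*(2*\<delta>/q - q/2) = 4*\<delta>/q - q" by (simp add: algebra_simps)
      have b: "1 = (q+\<delta>)/(q+\<delta>)" using qp by simp
      have "1 + (4*\<delta>/q - q)/(q+\<delta>) = ((q+\<delta>) + (4*\<delta>/q - q))/(q+\<delta>)"
        by (subst b) (simp only: add_divide_distrib)
      also have "\<dots> = (\<delta> + 4*\<delta>/q)/(\<delta>+q)" by (simp add: algebra_simps)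
      finally show ?thesis unfolding a .
    qed
    moreover have "(\<delta>+2*\<alpha>+1)/((\<delta>+2*\<alpha>+1) - (2*\<alpha>+2-p)) = (\<delta> + 4*\<delta>/q)/(\<delta>+q)"
      by (subst den, subst num, rule refl)
    ultimately show ?thesis unfolding S by simp
  qed
qed

lemma params_2:
  fixes \<delta> lam N :: real
  assumes d: "\<delta> \<ge> 1" and lam: "lam < 2 * S_pa \<delta> 2" and N: "N \<ge> 0"
  shows "\<exists>\<alpha>. \<alpha> > 0 \<and> \<delta>*(2*\<alpha>+1) - (2-1)*\<alpha>^2 > 0 \<and>
     (\<delta>+2*\<alpha>+1)/((\<delta>+2*\<alpha>+1) - (2*\<alpha>+2-2)) \<le> S_pa \<delta> 2 \<and>
     (N + 1 + 2) * (S_pa \<delta> 2 - (\<delta>+2*\<alpha>+1)/((\<delta>+2*\<alpha>+1) - (2*\<alpha>+2-2))) < 2 * S_pa \<delta> 2 - lam"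
proof -
  define r where "r = sqrt (\<delta>^2+\<delta>)"
  define a0 where "a0 = \<delta> + r"
  have r: "r \<ge> \<delta>" unfolding r_def using d by (intro real_le_rsqrt) auto
  have r2: "r^2 = \<delta>^2 + \<delta>" unfolding r_def using d by simp
  have S0: "S_pa \<delta> 2 = 1 + 2*a0/(1+\<delta>)" unfolding S_pa_def s_p_def a0_def r_def by simp
  define gap where "gap = 2 * S_pa \<delta> 2 - lam"
  have gap: "gap > 0" unfolding gap_def using lam by simp
  define t where "t = min (a0/2) ((\<delta>+1)*gap/(4*(N+3)))"
  have a0p: "a0 > 0" unfolding a0_def using r d by simp
  have tp: "t > 0" unfolding t_def using a0p gap d N by simp
  define \<alpha> where "\<alpha> = a0 - t"
  have t1: "t \<le> a0/2" unfolding t_def by (rule min.cobounded1)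
  have t2: "t \<le> (\<delta>+1)*gap/(4*(N+3))" unfolding t_def by (rule min.cobounded2)
  have ap: "\<alpha> > 0" unfolding \<alpha>_def using t1 a0p by simp
  have Sal: "(\<delta>+2*\<alpha>+1)/((\<delta>+2*\<alpha>+1) - (2*\<alpha>+2-2)) = S_pa \<delta> 2 - 2*t/(\<delta>+1)"
  proof -
    have den: "(\<delta>+2*\<alpha>+1) - (2*\<alpha>+2-2) = \<delta>+1" by simp
    have dn: "\<delta>+1 \<noteq> 0" using d by simp
    have l: "(\<delta>+2*\<alpha>+1)/(\<delta>+1) = 1 + 2*\<alpha>/(\<delta>+1)" using dn by (simp add: field_simps)
    have r: "S_pa \<delta> 2 - 2*t/(\<delta>+1) = 1 + 2*\<alpha>/(\<delta>+1)"
    proof -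
      have "S_pa \<delta> 2 - 2*t/(\<delta>+1) = 1 + (2*a0/(\<delta>+1) - 2*t/(\<delta>+1))" unfolding S0 by (simp add: add.commute)
      also have "2*a0/(\<delta>+1) - 2*t/(\<delta>+1) = 2*\<alpha>/(\<delta>+1)" unfolding \<alpha>_def by (simp add: diff_divide_distrib right_diff_distrib)
      finally show ?thesis .
    qed
    show ?thesis unfolding den l r ..
  qed
  have c: "\<delta>*(2*\<alpha>+1) - (2-1)*\<alpha>^2 > 0"
  proof -
    have "\<delta>*(2*\<alpha>+1) - (2-1)*\<alpha>^2 = t * (\<alpha> + r - \<delta>)"
      unfolding \<alpha>_def a0_def using r2 by (simp add: algebra_simps power2_eq_square)
    moreover have "\<alpha> + r - \<delta> > 0" using ap r by simp
    ultimately show ?thesis using tp by simp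
  qed
  have le: "(\<delta>+2*\<alpha>+1)/((\<delta>+2*\<alpha>+1) - (2*\<alpha>+2-2)) \<le> S_pa \<delta> 2" unfolding Sal using tp d by simp
  have "2*t/(\<delta>+1) \<le> 2*((\<delta>+1)*gap/(4*(N+3)))/(\<delta>+1)" using t2 d by (intro divide_right_mono) auto
  then have "(N+3)*(2*t/(\<delta>+1)) \<le> (N+3) * (2*((\<delta>+1)*gap/(4*(N+3)))/(\<delta>+1))"
    using N by (intro mult_left_mono) auto
  moreover have n3: "N + 1 + 2 = N + 3" by simp
  ultimately have "(N + 1 + 2) * (2*t/(\<delta>+1)) \<le> (N+3) * (2*((\<delta>+1)*gap/(4*(N+3)))/(\<delta>+1))" by (simp only: n3)
  also have "\<dots> = gap/2"
  proof -
    have gen: "\<And>A B g::real. A \<noteq> 0 \<Longrightarrow> B \<noteq> 0 \<Longrightarrow> A*(2*(B*g/(4*A))/B) = g/2"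
      by (simp add: field_simps)
    show ?thesis by (rule gen) (use N d in auto)
  qed
  also have "\<dots> < gap" using gap by simp
  finally have "(N + 1 + 2) * (S_pa \<delta> 2 - (\<delta>+2*\<alpha>+1)/((\<delta>+2*\<alpha>+1) - (2*\<alpha>+2-2))) < 2 * S_pa \<delta> 2 - lam"
    unfolding Sal gap_def by simp
  then show ?thesis using ap c le by blast
qed

theorem theorem3p4:
  fixes w g :: "'a::euclidean_space \<Rightarrow> real"
    and p \<delta> \<gamma> lam C :: real
  assumes p: "p \<ge> 2"
    and w_loc: "\<forall>K. compact K \<longrightarrow> set_integrable lebesgue K w"
    and g_loc: "\<forall>K. compact K \<longrightarrow> set_integrable lebesgue K g"
    and w_pos: "AE x in lebesgue. 0 < w x"
    and g_pos: "AE x in lebesgue. 0 < g x"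
    and g_inv: "\<exists>M. AE x in lebesgue. \<bar>1 / g x\<bar> \<le> M"
    and dg: "\<gamma> = \<delta>" and d1: "\<delta> \<ge> 1"
    and Pa: "class_Pa \<delta> p"
    and lam_pos: "lam > 0" and Cpos: "C > 0" and lamS: "lam < p * S_pa \<delta> p"
    and growth: "\<forall>R\<ge>1. (\<integral>\<^sup>+ x \<in> ball 0 (2 * R). ennreal (w x powr S_pa \<delta> p) \<partial>lebesgue)
                        \<le> ennreal (C * R powr lam)"
  shows "\<not> (\<exists>u. C1_fun u \<and> (\<forall>x. 0 < u x) \<and>
              weak_solution p \<delta> \<gamma> w g u \<and> stable_solution p \<delta> \<gamma> w g u)"
proof
  assume "\<exists>u. C1_fun u \<and> (\<forall>x. 0 < u x) \<and> weak_solution p \<delta> \<gamma> w g u \<and> stable_solution p \<delta> \<gamma> w g u"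
  then obtain u where uC1: "C1_fun u" and upos: "\<forall>x. 0 < u x"
    and weak: "weak_solution p \<delta> \<delta> w g u" and stab: "stable_solution p \<delta> \<delta> w g u"
    using dg by blast
  from g_inv obtain M0 where M0: "AE x in lebesgue. \<bar>1 / g x\<bar> \<le> M0" by blast
  define M where "M = max M0 1"
  have Mpos: "M > 0" unfolding M_def by simp
  have gM: "AE x in lebesgue. 1 / g x \<le> M"
  proof (rule eventually_mono[OF M0])
    fix x assume h: "\<bar>1 / g x\<bar> \<le> M0"
    show "1 / g x \<le> M" using abs_ge_self[of "1/g x"] h max.cobounded1[of M0 1] unfolding M_def by linarith
  qed
  define N where "N = real DIM('a)"
  have N0: "N \<ge> 0" unfolding N_def by simp
  define S0 where "S0 = S_pa \<delta> p"
  have "\<exists>\<alpha>. \<alpha> > 0 \<and> \<delta>*(2*\<alpha>+1) - (p-1)*\<alpha>^2 > 0 \<and> 2*\<alpha>+2-p > 0 \<and>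
     (\<delta>+2*\<alpha>+1)/((\<delta>+2*\<alpha>+1) - (2*\<alpha>+2-p)) \<le> S0 \<and>
     (N + 1 + p) * (S0 - (\<delta>+2*\<alpha>+1)/((\<delta>+2*\<alpha>+1) - (2*\<alpha>+2-p))) < p * S0 - lam"
  proof (cases "p = 2")
    case True
    have "lam < 2 * S_pa \<delta> 2" using lamS True by simp
    from params_2[OF d1 this N0] obtain \<alpha> where al: "\<alpha> > 0" "\<delta>*(2*\<alpha>+1) - (2-1)*\<alpha>^2 > 0"
      "(\<delta>+2*\<alpha>+1)/((\<delta>+2*\<alpha>+1) - (2*\<alpha>+2-2)) \<le> S_pa \<delta> 2"
      "(N + 1 + 2) * (S_pa \<delta> 2 - (\<delta>+2*\<alpha>+1)/((\<delta>+2*\<alpha>+1) - (2*\<alpha>+2-2))) < 2 * S_pa \<delta> 2 - lam"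
      by blast
    show ?thesis using al True unfolding S0_def by (intro exI[of _ \<alpha>]) auto
  next
    case False
    then have p2: "p > 2" using p by simp
    define \<alpha> where "\<alpha> = 2*\<delta>/(p-1) - 1/2"
    note pr = params_gt2[OF p2 Pa d1, folded \<alpha>_def]
    have "(N + 1 + p) * (S0 - (\<delta>+2*\<alpha>+1)/((\<delta>+2*\<alpha>+1) - (2*\<alpha>+2-p))) < p * S0 - lam"
      using pr(4) lamS unfolding S0_def by simp
    then show ?thesis using pr unfolding S0_def by (intro exI[of _ \<alpha>]) auto
  qed
  then obtain \<alpha> where alpos: "\<alpha> > 0" and cpos: "\<delta>*(2*\<alpha>+1) - (p-1)*\<alpha>^2 > 0"
    and apos: "2*\<alpha>+2-p > 0"
    and SSle: "(\<delta>+2*\<alpha>+1)/((\<delta>+2*\<alpha>+1) - (2*\<alpha>+2-p)) \<le> S0"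
    and cond: "(N + 1 + p) * (S0 - (\<delta>+2*\<alpha>+1)/((\<delta>+2*\<alpha>+1) - (2*\<alpha>+2-p))) < p * S0 - lam"
    by blast
  define SS where "SS = (\<delta>+2*\<alpha>+1)/((\<delta>+2*\<alpha>+1) - (2*\<alpha>+2-p))"
  have den: "(\<delta>+2*\<alpha>+1) - (2*\<alpha>+2-p) = \<delta> + p - 1" by simp
  have denp: "\<delta> + p - 1 > 0" using d1 p by simp
  have SS1: "SS \<ge> 1" unfolding SS_def den using denp apos by (simp add: field_simps)
  define k where "k = nat \<lceil>p*SS\<rceil> + 2"
  have kk: "k \<ge> 2" unfolding k_def by simp
  have kge: "real k \<ge> p*SS + 2" unfolding k_def by linarith
  have kp: "2*real k > p" using kge SS1 p by (smt (verit) mult_le_cancel_left1)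
  have mpos: "SS * (2*real k - p - 2*real k*(2*\<alpha>+2-p)/(\<delta>+2*\<alpha>+1)) \<ge> 0"
  proof -
    have bp: "\<delta>+2*\<alpha>+1 > 0" using alpos d1 by simp
    have "2*real k - 2*real k*(2*\<alpha>+2-p)/(\<delta>+2*\<alpha>+1) = 2*real k / SS"
      unfolding SS_def den using bp denp by (simp add: field_simps)
    moreover have "2*real k / SS \<ge> p"
      using kge SS1 p by (simp add: field_simps)
    ultimately show ?thesis using SS1 by simp
  qed
  interpret S1: setting u w g p \<delta> \<alpha> k
    by (unfold_locales) (use uC1 upos w_loc g_loc p kk in auto)
  interpret S: setting2 u w g p \<delta> \<alpha> k M
    by (unfold_locales) (use weak stab w_pos g_pos gM Mpos d1 p alpos cpos apos kp mpos
    in \<open>auto simp: S1.aa_def S1.bb_def S1.SS_def SS_def\<close>)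
  have SSeq: "S1.SS = SS" unfolding S1.SS_def S1.aa_def S1.bb_def SS_def ..
  obtain K where K: "\<forall>R\<ge>1. integrable lebesgue (\<lambda>x. indicator (ball 0 (2*R)) x * w x powr SS) \<longrightarrow>
      integral\<^sup>L lebesgue (S1.fB R) \<le> K * (R powr (-p*SS) * (\<integral>x. indicator (ball 0 (2*R)) x * w x powr SS \<partial>lebesgue))"
    using S.main_est unfolding SSeq by blast
  have wm: "w \<in> borel_measurable lebesgue" by (rule loc_meas[OF w_loc])
  have w0: "AE x in lebesgue. 0 \<le> w x" by (rule eventually_mono[OF w_pos]) simp
  have p0: "p \<ge> 0" using p by simp
  have cond': "(real DIM('a) + 1 + p) * (S_pa \<delta> p - SS) < p * S_pa \<delta> p - lam"
    using cond unfolding N_def S0_def SS_def .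
  have SSle': "SS \<le> S_pa \<delta> p" using SSle unfolding S0_def SS_def .
  note dec = decay[OF wm w0 growth Cpos SS1 SSle' p0 cond']
  define B where "B = integral\<^sup>L lebesgue (S1.fB 1)"
  have Bp: "B > 0" unfolding B_def by (rule S.IB1_pos)
  obtain R where R: "R \<ge> 1"
    and lt: "K * (R powr (-p*SS) * (\<integral>x. indicator (ball 0 (2*R)) x * w x powr SS \<partial>lebesgue)) < B"
    using dec(2) Bp by blast
  have "integral\<^sup>L lebesgue (S1.fB R) \<le> K * (R powr (-p*SS) * (\<integral>x. indicator (ball 0 (2*R)) x * w x powr SS \<partial>lebesgue))"
    using K dec(1) R by blast
  moreover have "B \<le> integral\<^sup>L lebesgue (S1.fB R)" unfolding B_def by (rule S.IB_mono[OF R])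
  ultimately show False using lt by linarith
qed


end
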